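(* Assume Assumption A and the clustering setup. Consider the reduced networked system $\hat\Sigma$: $\dot\xi=(I_{\bar n-1}\otimes A-\hat L\otimes BC)\xi+(\hat G\otimes B)u$, $\hat y=(\hat H\otimes C)\xi$, where $\hat L=W^\top LV$, $\hat G=W^\top G$, $\hat H=HV$, $\xi=(\xi_1,\dots,\xi_{\bar n-1})$, $\xi_p\in\mathbb{R}^n$. Then for $u\equiv0$ every solution satisfies $\lim_{t\to\infty}(\xi_p(t)-\xi_q(t))=0$ for all $p,q\in\{1,\dots,\bar n-1\}$.
   Context: Subsystem data: $Q=Q^\top\succ0$, $J=-J^\top$, $R=R^\top\succeq0$ in $\mathbb{R}^{n\times n}$, $B\in\mathbb{R}^{n\times m}$, $A=(J-R)Q$, $C=B^\top Q$, with $(A,B,C)$ a minimal realization. Weights $w_{ij}\ge0$ ($i\ne j\in\{1,\dots,\bar n\}$, $\bar n\ge3$); $L_{ij}=-w_{ij}$ for $i\neq j$, $L_{ii}=\sum_{j\ne i}w_{ij}$; $G\in\mathbb{R}^{\bar n\times\bar m}$, $H\in\mathbb{R}^{\bar p\times\bar n}$. The directed graph $\mathcal G$ has an arc $(i,j)$ iff $w_{ji}>0$; the underlying undirected graph $\mathcal G_u$ has an edge between $i$ and $j$ iff $w_{ij}+w_{ji}>0$. A directed rooted spanning tree is a subgraph that is a directed tree containing all vertices in which every vertex except one root has exactly one incoming arc. Assumption A: (i) $\mathcal G_u$ is a tree; (ii) $\mathcal G$ contains a directed rooted spanning tree. Clustering setup: vertices numbered so that vertices $i=\bar n-1$ and $j=\bar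 n$ are adjacent in $\mathcal G_u$, and $V=\begin{bmatrix}I_{\bar n-2}&0\\0&1\\0&1\end{bmatrix}$, $W=\begin{bmatrix}I_{\bar n-2}&0\\0&\frac{w_{ji}}{w_{ij}+w_{ji}}\\0&\frac{w_{ij}}{w_{ij}+w_{ji}}\end{bmatrix}$. $\otimes$ is the Kronecker product. *)

theory Defs
  imports Complex_Main "Jordan_Normal_Form.Matrix"
begin

definition kron :: "real mat \<Rightarrow> real mat \<Rightarrow> real mat" where
  "kron A B = mat (dim_row A * dim_row B) (dim_col A * dim_col B)
     (\<lambda>(i,j). A $$ (i div dim_row B, j div dim_col B) * B $$ (i mod dim_row B, j mod dim_col B))"

definition sym_mat :: "real mat \<Rightarrow> bool" where
  "sym_mat M \<longleftrightarrow> transpose_mat M = M"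

definition skew_mat :: "real mat \<Rightarrow> bool" where
  "skew_mat M \<longleftrightarrow> transpose_mat M = - M"

definition pos_def :: "nat \<Rightarrow> real mat \<Rightarrow> bool" where
  "pos_def n M \<longleftrightarrow> M \<in> carrier_mat n n \<and> sym_mat M \<and>
     (\<forall>x \<in> carrier_vec n. x \<noteq> 0\<^sub>v n \<longrightarrow> x \<bullet> (M *\<^sub>v x) > 0)"

definition pos_semidef :: "nat \<Rightarrow> real mat \<Rightarrow> bool" where
  "pos_semidef n M \<longleftrightarrow> M \<in> carrier_mat n n \<and> sym_mat M \<and>
     (\<forall>x \<in> carrier_vec n. x \<bullet> (M *\<^sub>v x) \<ge> 0)"

text \<open>Kalman rank conditions: the controllability matrix [B, AB, ..., A^(n-1) B] has
  full row rank n (trivial left kernel), the observability matrix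
  [C; CA; ...; C A^(n-1)] has full column rank n (trivial kernel).\<close>

definition controllable :: "nat \<Rightarrow> real mat \<Rightarrow> real mat \<Rightarrow> bool" where
  "controllable n A B \<longleftrightarrow>
     (\<forall>v \<in> carrier_vec n. (\<forall>k < n. (transpose_mat (A ^\<^sub>m k * B)) *\<^sub>v v = 0\<^sub>v (dim_col B))
        \<longrightarrow> v = 0\<^sub>v n)"

definition observable :: "nat \<Rightarrow> real mat \<Rightarrow> real mat \<Rightarrow> bool" where
  "observable n A C \<longleftrightarrow>
     (\<forall>v \<in> carrier_vec n. (\<forall>k < n. (C * A ^\<^sub>m k) *\<^sub>v v = 0\<^sub>v (dim_row C))
        \<longrightarrow> v = 0\<^sub>v n)"

definition minimal_realization :: "nat \<Rightarrow> real mat \<Rightarrow> real mat \<Rightarrow> real mat \<Rightarrow> bool" where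
  "minimal_realization n A B C \<longleftrightarrow> controllable n A B \<and> observable n A C"

definition is_walk :: "(nat \<Rightarrow> nat \<Rightarrow> bool) \<Rightarrow> nat \<Rightarrow> nat list \<Rightarrow> bool" where
  "is_walk adj N vs \<longleftrightarrow> vs \<noteq> [] \<and> set vs \<subseteq> {0..<N} \<and>
     (\<forall>k. Suc k < length vs \<longrightarrow> adj (vs ! k) (vs ! Suc k))"

definition ugraph_connected :: "(nat \<Rightarrow> nat \<Rightarrow> bool) \<Rightarrow> nat \<Rightarrow> bool" where
  "ugraph_connected adj N \<longleftrightarrow>
     (\<forall>i < N. \<forall>j < N. \<exists>vs. is_walk adj N vs \<and> hd vs = i \<and> last vs = j)"

definition is_cycle :: "(nat \<Rightarrow> nat \<Rightarrow> bool) \<Rightarrow> nat \<Rightarrow> nat list \<Rightarrow> bool" where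
  "is_cycle adj N vs \<longleftrightarrow> length vs \<ge> 3 \<and> distinct vs \<and> is_walk adj N vs \<and> adj (last vs) (hd vs)"

definition ugraph_tree :: "(nat \<Rightarrow> nat \<Rightarrow> bool) \<Rightarrow> nat \<Rightarrow> bool" where
  "ugraph_tree adj N \<longleftrightarrow> ugraph_connected adj N \<and> (\<nexists>vs. is_cycle adj N vs)"

definition arcs :: "(nat \<Rightarrow> nat \<Rightarrow> real) \<Rightarrow> nat \<Rightarrow> (nat \<times> nat) set" where
  "arcs w N = {(i,j). i < N \<and> j < N \<and> i \<noteq> j \<and> w j i > 0}"

definition und_adj :: "(nat \<Rightarrow> nat \<Rightarrow> real) \<Rightarrow> nat \<Rightarrow> nat \<Rightarrow> bool" where
  "und_adj w i j \<longleftrightarrow> i \<noteq> j \<and> w i j + w j i > 0"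

definition has_directed_rooted_spanning_tree :: "(nat \<Rightarrow> nat \<Rightarrow> real) \<Rightarrow> nat \<Rightarrow> bool" where
  "has_directed_rooted_spanning_tree w N \<longleftrightarrow>
     (\<exists>T r. T \<subseteq> arcs w N \<and> r < N \<and>
        (\<forall>v < N. v \<noteq> r \<longrightarrow> (\<exists>!u. (u, v) \<in> T)) \<and> (\<forall>u. (u, r) \<notin> T) \<and>
        ugraph_tree (\<lambda>a b. (a, b) \<in> T \<or> (b, a) \<in> T) N)"

definition laplacian :: "(nat \<Rightarrow> nat \<Rightarrow> real) \<Rightarrow> nat \<Rightarrow> real mat" where
  "laplacian w N = mat N N (\<lambda>(i,j). if i = j then (\<Sum>k \<in> {0..<N} - {i}. w i k) else - w i j)"

section \<open>Clustering matrices (vertices 0-based: i = N-2, j = N-1)\<close>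

definition clusterV :: "nat \<Rightarrow> real mat" where
  "clusterV N = mat N (N - 1) (\<lambda>(r,c). if r < N - 2 then (if r = c then 1 else 0)
                                       else (if c = N - 2 then 1 else 0))"

definition clusterW :: "(nat \<Rightarrow> nat \<Rightarrow> real) \<Rightarrow> nat \<Rightarrow> real mat" where
  "clusterW w N = mat N (N - 1) (\<lambda>(r,c). if r < N - 2 then (if r = c then 1 else 0)
      else if c \<noteq> N - 2 then 0
      else if r = N - 2 then w (N - 1) (N - 2) / (w (N - 2) (N - 1) + w (N - 1) (N - 2))
      else w (N - 2) (N - 1) / (w (N - 2) (N - 1) + w (N - 1) (N - 2)))"

end

theory Submission
  imports Defs "Jordan_Normal_Form.Schur_Decomposition" "HOL-Analysis.Analysis" "HOL-Real_Asymp.Real_Asymp"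
begin


lemma decay_real:
  fixes u h :: "real \<Rightarrow> real" and c :: real
  assumes c: "c > 0" and u_nonneg: "\<And>t. t > 0 \<Longrightarrow> u t \<ge> 0"
    and der: "\<And>t. t > 0 \<Longrightarrow> \<exists>u'. (u has_real_derivative u') (at t) \<and> u' \<le> - c * u t + h t"
    and h: "(h \<longlongrightarrow> 0) at_top"
  shows "(u \<longlongrightarrow> 0) at_top"
proof (rule tendstoI)
  fix e :: real assume e: "e > 0"
  have "eventually (\<lambda>t. dist (h t) 0 < c * e / 2) at_top"
    using tendstoD[OF h, of "c * e / 2"] c e by auto
  then obtain T0 where T0': "\<And>t. t \<ge> T0 \<Longrightarrow> dist (h t) 0 < c * e / 2"
    unfolding eventually_at_top_linorder by blast
  have T0: "h t < c * e / 2" if "t \<ge> T0" for t using T0'[OF that] by (auto simp: dist_real_def)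
  define T where "T = max T0 1"
  have T: "T > 0" "T \<ge> T0" unfolding T_def by auto
  define \<phi> where "\<phi> t = exp (c * t) * (u t - e / 2)" for t
  have mono: "\<phi> t \<le> \<phi> T" if t: "t \<ge> T" for t
  proof (rule DERIV_nonpos_imp_nonincreasing[OF t])
    fix x assume x: "T \<le> x" "x \<le> t"
    then have xp: "x > 0" using T by auto
    obtain u' where u': "(u has_real_derivative u') (at x)" "u' \<le> - c * u x + h x"
      using der[OF xp] by blast
    have D: "(\<phi> has_real_derivative (c * exp (c * x) * (u x - e / 2) + exp (c * x) * u')) (at x)"
      unfolding \<phi>_def
      by (auto intro!: derivative_eq_intros u'(1))
    have "h x < c * e / 2" using T0 x T by auto
    then have "c * (u x - e / 2) + u' \<le> 0" using u'(2) by (simp add: algebra_simps)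
    then have "exp (c * x) * (c * (u x - e / 2) + u') \<le> 0"
      by (simp add: mult_nonneg_nonpos)
    then have "c * exp (c * x) * (u x - e / 2) + exp (c * x) * u' \<le> 0"
      by (simp add: algebra_simps)
    with D show "\<exists>y. (\<phi> has_real_derivative y) (at x) \<and> y \<le> 0" by blast
  qed
  have lim: "((\<lambda>t. exp (c * (T - t)) * \<bar>u T\<bar>) \<longlongrightarrow> 0) at_top"
    using c by real_asymp
  have ev: "eventually (\<lambda>t. exp (c * (T - t)) * \<bar>u T\<bar> < e / 2) at_top"
    using tendstoD[OF lim, of "e/2"] e by (auto simp: dist_real_def elim: eventually_mono)
  have ev2: "eventually (\<lambda>t. t \<ge> T) at_top" by (rule eventually_ge_at_top)
  show "eventually (\<lambda>t. dist (u t) 0 < e) at_top"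
    using ev ev2
  proof eventually_elim
    case (elim t)
    have "\<phi> t \<le> \<phi> T" using mono elim(2) .
    then have "exp (c * t) * (u t - e / 2) \<le> exp (c * T) * (u T - e / 2)" unfolding \<phi>_def .
    then have "u t - e / 2 \<le> exp (c * T) * (u T - e / 2) / exp (c * t)"
      by (simp add: field_simps)
    also have "\<dots> = exp (c * (T - t)) * (u T - e / 2)"
      by (simp add: right_diff_distrib exp_diff diff_divide_distrib)
    also have "\<dots> \<le> exp (c * (T - t)) * \<bar>u T\<bar>"
      using e by (intro mult_left_mono) auto
    finally have "u t < e" using elim(1) by linarith
    moreover have "u t \<ge> 0" using u_nonneg T elim(2) by auto
    ultimately show ?case by (simp add: dist_real_def)
  qed
qed

lemma decay_complex:
  fixes y g :: "real \<Rightarrow> complex" and a :: complex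
  assumes a: "Re a < 0" and g: "(g \<longlongrightarrow> 0) at_top"
    and der: "\<And>t. t > 0 \<Longrightarrow> (y has_vector_derivative (a * y t + g t)) (at t)"
  shows "(y \<longlongrightarrow> 0) at_top"
proof -
  define c where "c = - Re a"
  have c: "c > 0" using a unfolding c_def by auto
  define u where "u t = (Re (y t))\<^sup>2 + (Im (y t))\<^sup>2" for t
  define h where "h t = (cmod (g t))\<^sup>2 / c" for t
  have u_norm: "u t = (cmod (y t))\<^sup>2" for t unfolding u_def cmod_def by simp
  have "(u \<longlongrightarrow> 0) at_top"
  proof (rule decay_real[OF c])
    show "u t \<ge> 0" for t unfolding u_def by simp
    have "((\<lambda>t. (cmod (g t))\<^sup>2 / c) \<longlongrightarrow> (cmod 0)\<^sup>2 / c) at_top"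
      using c by (intro tendsto_intros g) auto
    then show "(h \<longlongrightarrow> 0) at_top" unfolding h_def by simp
    fix t :: real assume t: "t > 0"
    let ?v = "a * y t + g t"
    have dRe: "((\<lambda>s. Re (y s)) has_real_derivative Re ?v) (at t)"
      unfolding has_real_derivative_iff_has_vector_derivative
      using bounded_linear.has_vector_derivative[OF bounded_linear_Re der[OF t]] .
    have dIm: "((\<lambda>s. Im (y s)) has_real_derivative Im ?v) (at t)"
      unfolding has_real_derivative_iff_has_vector_derivative
      using bounded_linear.has_vector_derivative[OF bounded_linear_Im der[OF t]] .
    have D: "(u has_real_derivative (2 * (Re (y t) * Re ?v + Im (y t) * Im ?v))) (at t)"
      unfolding u_def
      by (rule DERIV_cong[OF DERIV_add[OF DERIV_power[OF dRe, of 2] DERIV_power[OF dIm, of 2]]])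
        (simp add: algebra_simps)
    have e1: "Re (y t) * Re (a * y t) + Im (y t) * Im (a * y t) = Re a * u t"
      unfolding u_def by (simp add: algebra_simps power2_eq_square)
    have e2: "Re (y t) * Re (g t) + Im (y t) * Im (g t) \<le> cmod (y t) * cmod (g t)"
    proof -
      have "Re (y t) * Re (g t) + Im (y t) * Im (g t) = Re (cnj (y t) * g t)" by simp
      also have "\<dots> \<le> cmod (cnj (y t) * g t)" by (rule complex_Re_le_cmod)
      also have "\<dots> = cmod (y t) * cmod (g t)" by (simp add: norm_mult)
      finally show ?thesis .
    qed
    have e3: "2 * (cmod (y t) * cmod (g t)) \<le> c * u t + h t"
    proof -
      have "0 \<le> (c * cmod (y t) - cmod (g t))\<^sup>2" by simp
      then have "2 * c * (cmod (y t) * cmod (g t)) \<le> c * (c * (cmod (y t))\<^sup>2) + (cmod (g t))\<^sup>2"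
        by (simp add: power2_eq_square algebra_simps)
      then have "2 * (cmod (y t) * cmod (g t)) \<le> (c * (c * (cmod (y t))\<^sup>2) + (cmod (g t))\<^sup>2) / c"
        using c by (simp add: field_simps)
      also have "\<dots> = c * u t + h t" unfolding u_norm h_def using c by (simp add: field_simps)
      finally show ?thesis .
    qed
    have "2 * (Re (y t) * Re ?v + Im (y t) * Im ?v)
        = 2 * (Re (y t) * Re (a * y t) + Im (y t) * Im (a * y t))
          + 2 * (Re (y t) * Re (g t) + Im (y t) * Im (g t))"
      by (simp add: algebra_simps)
    also have "\<dots> \<le> 2 * (Re a * u t) + (c * u t + h t)"
    proof (rule add_mono)
      show "2 * (Re (y t) * Re (a * y t) + Im (y t) * Im (a * y t)) \<le> 2 * (Re a * u t)"
        using e1 by (simp only:)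
      show "2 * (Re (y t) * Re (g t) + Im (y t) * Im (g t)) \<le> c * u t + h t"
        by (rule order_trans[OF _ e3]) (use e2 in simp)
    qed
    also have "\<dots> = - c * u t + h t" unfolding c_def by (simp add: algebra_simps)
    finally show "\<exists>u'. (u has_real_derivative u') (at t) \<and> u' \<le> - c * u t + h t"
      using D by blast
  qed
  then have "((\<lambda>t. sqrt (u t)) \<longlongrightarrow> sqrt 0) at_top" by (intro tendsto_intros)
  then have "((\<lambda>t. norm (y t)) \<longlongrightarrow> 0) at_top" unfolding u_norm by simp
  then show ?thesis using tendsto_norm_zero_iff by blast
qed


lemma mat_mult_entry_sum:
  assumes "A \<in> carrier_mat n k" "B \<in> carrier_mat k m" "i < n" "j < m"
  shows "(A * B) $$ (i,j) = (\<Sum>l<k. A $$ (i,l) * B $$ (l,j))"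
  using assms by (simp add: index_mult_mat scalar_prod_def atLeast0LessThan row_def col_def)

lemma sum_swap_mult:
  fixes a :: "nat \<Rightarrow> 'a::comm_ring_1"
  shows "(\<Sum>k<K. a k * (\<Sum>l<L. b k l * c l)) = (\<Sum>l<L. (\<Sum>k<K. a k * b k l) * c l)"
proof -
  have "(\<Sum>k<K. a k * (\<Sum>l<L. b k l * c l)) = (\<Sum>k<K. \<Sum>l<L. a k * b k l * c l)"
    by (simp add: sum_distrib_left mult.assoc)
  also have "\<dots> = (\<Sum>l<L. \<Sum>k<K. a k * b k l * c l)" by (rule sum.swap)
  also have "\<dots> = (\<Sum>l<L. (\<Sum>k<K. a k * b k l) * c l)" by (simp add: sum_distrib_right)
  finally show ?thesis .
qed

definition qf :: "nat \<Rightarrow> real mat \<Rightarrow> (nat \<Rightarrow> real) \<Rightarrow> real" where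
  "qf n X a = (\<Sum>i<n. a i * (\<Sum>k<n. X $$ (i,k) * a k))"

lemma qf_vec: "X \<in> carrier_mat n n \<Longrightarrow> scalar_prod (Matrix.vec n a) (X *\<^sub>v Matrix.vec n a) = qf n X a"
  unfolding qf_def by (simp add: scalar_prod_def atLeast0LessThan row_def)

lemma sym_entry:
  assumes "X \<in> carrier_mat n n" "sym_mat X" "i < n" "k < n"
  shows "X $$ (i,k) = X $$ (k,i)"
proof -
  have "transpose_mat X $$ (i,k) = X $$ (k,i)" using assms(1,3,4) by simp
  then show ?thesis using assms(2) unfolding sym_mat_def by simp
qed

lemma skew_entry:
  assumes "X \<in> carrier_mat n n" "skew_mat X" "i < n" "k < n"
  shows "X $$ (i,k) = - X $$ (k,i)"
proof -
  have "transpose_mat X $$ (i,k) = X $$ (k,i)" using assms(1,3,4) by simp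
  moreover have "(- X) $$ (i,k) = - X $$ (i,k)" using assms(1,3,4) by simp
  ultimately show ?thesis using assms(2) unfolding skew_mat_def by simp
qed

lemma antisym_sum_zero:
  fixes f :: "nat \<Rightarrow> nat \<Rightarrow> real"
  assumes "\<And>i k. i < n \<Longrightarrow> k < n \<Longrightarrow> f i k = - f k i"
  shows "(\<Sum>i<n. \<Sum>k<n. f i k) = 0"
proof -
  have "(\<Sum>i<n. \<Sum>k<n. f i k) = (\<Sum>k<n. \<Sum>i<n. f i k)" by (rule sum.swap)
  also have "\<dots> = (\<Sum>k<n. \<Sum>i<n. - f k i)"
    by (rule sum.cong[OF refl], rule sum.cong[OF refl]) (metis assms lessThan_iff)
  also have "\<dots> = - (\<Sum>i<n. \<Sum>k<n. f i k)" by (simp add: sum_negf)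
  finally show ?thesis by linarith
qed

lemma psd_nonneg: assumes "pos_semidef n R" shows "qf n R a \<ge> 0"
proof -
  have R: "R \<in> carrier_mat n n" using assms unfolding pos_semidef_def by auto
  have "Matrix.vec n a \<in> carrier_vec n" by simp
  then have "0 \<le> scalar_prod (Matrix.vec n a) (R *\<^sub>v Matrix.vec n a)"
    using assms unfolding pos_semidef_def by blast
  then show ?thesis using qf_vec[OF R] by simp
qed

lemma psd_zero:
  assumes R: "pos_semidef n R" and z: "qf n R a = 0" and i: "i < n"
  shows "(\<Sum>k<n. R $$ (i,k) * a k) = 0"
proof -
  have Rc: "R \<in> carrier_mat n n" and Rs: "sym_mat R" using R unfolding pos_semidef_def by auto
  define g where "g i = (\<Sum>k<n. R $$ (i,k) * a k)" for i
  define S where "S = (\<Sum>i<n. g i * g i)"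
  define P where "P = qf n R g"
  have P: "P \<ge> 0" unfolding P_def by (rule psd_nonneg[OF R])
  have cross: "(\<Sum>i<n. a i * (\<Sum>k<n. R $$ (i,k) * g k)) = S"
  proof -
    have "(\<Sum>i<n. a i * (\<Sum>k<n. R $$ (i,k) * g k)) = (\<Sum>k<n. (\<Sum>i<n. a i * R $$ (i,k)) * g k)"
      by (rule sum_swap_mult)
    also have "\<dots> = (\<Sum>k<n. g k * g k)"
    proof (rule sum.cong[OF refl])
      fix k assume k: "k \<in> {..<n}"
      have "(\<Sum>i<n. a i * R $$ (i,k)) = g k"
        unfolding g_def using sym_entry[OF Rc Rs] k by (auto intro!: sum.cong simp: mult.commute)
      then show "(\<Sum>i<n. a i * R $$ (i,k)) * g k = g k * g k" by simp
    qed
    finally show ?thesis unfolding S_def .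
  qed
  have inner: "(\<Sum>k<n. R $$ (i,k) * (a k + t * g k)) = g i + t * (\<Sum>k<n. R $$ (i,k) * g k)"
    for i t unfolding g_def[of i]
    by (simp add: distrib_left sum.distrib sum_distrib_left mult.left_commute)
  have expand: "qf n R (\<lambda>k. a k + t * g k) = qf n R a + 2 * t * S + t\<^sup>2 * P" for t
  proof -
    have "qf n R (\<lambda>k. a k + t * g k) = (\<Sum>i<n. (a i + t * g i) * (g i + t * (\<Sum>k<n. R $$ (i,k) * g k)))"
      unfolding qf_def inner ..
    also have "\<dots> = (\<Sum>i<n. a i * g i) + t * (\<Sum>i<n. a i * (\<Sum>k<n. R $$ (i,k) * g k))
        + t * (\<Sum>i<n. g i * g i) + t\<^sup>2 * (\<Sum>i<n. g i * (\<Sum>k<n. R $$ (i,k) * g k))"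
      by (simp add: algebra_simps sum.distrib sum_distrib_left power2_eq_square)
    also have "(\<Sum>i<n. a i * g i) = qf n R a" unfolding qf_def g_def ..
    finally show ?thesis using cross unfolding S_def P_def qf_def by simp
  qed
  define t where "t = - S / (P + 1)"
  have P1: "P + 1 \<noteq> 0" using P by linarith
  have tu: "t * (P + 1) = - S" unfolding t_def using P1 by simp
  have "0 \<le> qf n R (\<lambda>k. a k + t * g k)" by (rule psd_nonneg[OF R])
  then have "0 \<le> 2 * t * S + t\<^sup>2 * P" using expand z by simp
  then have "0 \<le> (2 * t * S + t\<^sup>2 * P) * (P + 1)\<^sup>2" using P by simp
  also have "\<dots> = 2 * S * (t * (P + 1)) * (P + 1) + (t * (P + 1))\<^sup>2 * P"
    by (simp add: power2_eq_square algebra_simps)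
  also have "\<dots> = - S\<^sup>2 * (P + 2)"
    unfolding tu by (simp add: power2_eq_square algebra_simps)
  finally have "S\<^sup>2 * (P + 2) \<le> 0" by simp
  then have "S\<^sup>2 \<le> 0" using P by (simp add: mult_le_0_iff)
  then have S0: "S = 0" by simp
  have "\<forall>i\<in>{..<n}. g i * g i = 0"
    using S0 unfolding S_def by (subst sum_nonneg_eq_0_iff[symmetric]) auto
  then show ?thesis using i unfolding g_def by auto
qed

lemma re_quad:
  fixes u v :: "nat \<Rightarrow> complex" and X :: "nat \<Rightarrow> nat \<Rightarrow> real"
  shows "Re (\<Sum>i<n. cnj (u i) * (\<Sum>k<n. of_real (X i k) * v k))
       = (\<Sum>i<n. \<Sum>k<n. X i k * (Re (u i) * Re (v k) + Im (u i) * Im (v k)))"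
  unfolding Re_sum sum_distrib_left
  by (rule sum.cong[OF refl], rule sum.cong[OF refl]) (simp add: algebra_simps)

lemma re_quad_qf:
  fixes u :: "nat \<Rightarrow> complex"
  shows "Re (\<Sum>i<n. cnj (u i) * (\<Sum>k<n. of_real (X $$ (i,k)) * u k))
       = qf n X (\<lambda>k. Re (u k)) + qf n X (\<lambda>k. Im (u k))"
proof -
  have e: "Re (\<Sum>i<n. cnj (u i) * (\<Sum>k<n. of_real (X $$ (i,k)) * u k))
     = (\<Sum>i<n. \<Sum>k<n. X $$ (i,k) * (Re (u i) * Re (u k) + Im (u i) * Im (u k)))"
    using re_quad[where X="\<lambda>i k. X $$ (i,k)" and u=u and v=u and n=n] by simp
  show ?thesis unfolding e
    by (unfold qf_def sum_distrib_left sum.distrib[symmetric], rule sum.cong[OF refl],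
        rule sum.cong[OF refl]) (simp add: algebra_simps)
qed

lemma block_hurwitz:
  fixes Q J R B A C :: "real mat" and z :: "nat \<Rightarrow> complex" and lam mu :: complex
  assumes Q: "pos_def n Q" and Jc: "J \<in> carrier_mat n n" and Js: "skew_mat J"
    and R: "pos_semidef n R"
    and B: "B \<in> carrier_mat n m" and A_def: "A = (J - R) * Q" and C_def: "C = transpose_mat B * Q"
    and obs: "observable n A C"
    and eq: "\<And>i. i < n \<Longrightarrow> (\<Sum>j<n. of_real (A $$ (i,j)) * z j)
                 - lam * (\<Sum>j<n. of_real ((B * C) $$ (i,j)) * z j) = mu * z i"
    and nz: "i0 < n" "z i0 \<noteq> 0"
    and lam: "Re lam > 0"
  shows "Re mu < 0"
proof (rule ccontr)
  assume "\<not> Re mu < 0" then have mu0: "Re mu \<ge> 0" by simp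
  have Qc: "Q \<in> carrier_mat n n" and Qs: "sym_mat Q" using Q unfolding pos_def_def by auto
  have Rc: "R \<in> carrier_mat n n" and Rs: "sym_mat R" using R unfolding pos_semidef_def by auto
  have JRc: "J - R \<in> carrier_mat n n" using Jc Rc by (simp add: minus_carrier_mat)
  have Ac: "A \<in> carrier_mat n n" unfolding A_def using JRc Qc by simp
  have BTc: "transpose_mat B \<in> carrier_mat m n" using B by simp
  have Cc: "C \<in> carrier_mat m n" unfolding C_def using BTc Qc by simp
  have Ae: "A $$ (i,j) = (\<Sum>k<n. (J $$ (i,k) - R $$ (i,k)) * Q $$ (k,j))" if "i < n" "j < n" for i j
    unfolding A_def using mat_mult_entry_sum[OF JRc Qc that] that Jc Rc by simp
  have Ce: "C $$ (l,j) = (\<Sum>k<n. B $$ (k,l) * Q $$ (k,j))" if "l < m" "j < n" for l j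
    unfolding C_def using mat_mult_entry_sum[OF BTc Qc that] that B by simp
  have BCe: "(B * C) $$ (i,j) = (\<Sum>l<m. B $$ (i,l) * C $$ (l,j))" if "i < n" "j < n" for i j
    using mat_mult_entry_sum[OF B Cc that] .
  define y where "y k = (\<Sum>j<n. of_real (Q $$ (k,j)) * z j)" for k
  define s where "s l = (\<Sum>k<n. of_real (B $$ (k,l)) * y k)" for l
  have Az: "(\<Sum>j<n. of_real (A $$ (i,j)) * z j) = (\<Sum>k<n. of_real (J $$ (i,k) - R $$ (i,k)) * y k)"
    if i: "i < n" for i
  proof -
    have "(\<Sum>j<n. of_real (A $$ (i,j)) * z j)
        = (\<Sum>j<n. (\<Sum>k<n. of_real (J $$ (i,k) - R $$ (i,k)) * of_real (Q $$ (k,j))) * z j)"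
      by (rule sum.cong[OF refl]) (simp add: Ae i of_real_sum)
    also have "\<dots> = (\<Sum>k<n. of_real (J $$ (i,k) - R $$ (i,k)) * y k)"
      unfolding y_def by (rule sum_swap_mult[symmetric])
    finally show ?thesis .
  qed
  have Cz: "(\<Sum>j<n. of_real (C $$ (l,j)) * z j) = s l" if l: "l < m" for l
  proof -
    have "(\<Sum>j<n. of_real (C $$ (l,j)) * z j)
        = (\<Sum>j<n. (\<Sum>k<n. of_real (B $$ (k,l)) * of_real (Q $$ (k,j))) * z j)"
      by (rule sum.cong[OF refl]) (simp add: Ce l of_real_sum)
    also have "\<dots> = s l"
      unfolding s_def y_def by (rule sum_swap_mult[symmetric])
    finally show ?thesis .
  qed
  have BCz: "(\<Sum>j<n. of_real ((B * C) $$ (i,j)) * z j) = (\<Sum>l<m. of_real (B $$ (i,l)) * s l)"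
    if i: "i < n" for i
  proof -
    have "(\<Sum>j<n. of_real ((B * C) $$ (i,j)) * z j)
        = (\<Sum>j<n. (\<Sum>l<m. of_real (B $$ (i,l)) * of_real (C $$ (l,j))) * z j)"
      by (rule sum.cong[OF refl]) (simp add: BCe i of_real_sum)
    also have "\<dots> = (\<Sum>l<m. of_real (B $$ (i,l)) * (\<Sum>j<n. of_real (C $$ (l,j)) * z j))"
      by (rule sum_swap_mult[symmetric])
    also have "\<dots> = (\<Sum>l<m. of_real (B $$ (i,l)) * s l)"
      using Cz by simp
    finally show ?thesis .
  qed
  define Jy where "Jy i = (\<Sum>k<n. of_real (J $$ (i,k)) * y k)" for i
  define Ry where "Ry i = (\<Sum>k<n. of_real (R $$ (i,k)) * y k)" for i
  define Bs where "Bs i = (\<Sum>l<m. of_real (B $$ (i,l)) * s l)" for i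
  have Az2: "(\<Sum>j<n. of_real (A $$ (i,j)) * z j) = Jy i - Ry i" if "i < n" for i
    unfolding Az[OF that] Jy_def Ry_def by (simp add: sum_subtractf algebra_simps)
  have E: "Jy i - Ry i - lam * Bs i = mu * z i" if i: "i < n" for i
    using eq[OF i] Az2[OF i] BCz[OF i] unfolding Bs_def by simp
  define Jq where "Jq = (\<Sum>i<n. cnj (y i) * Jy i)"
  define Rq where "Rq = (\<Sum>i<n. cnj (y i) * Ry i)"
  define Bq where "Bq = (\<Sum>i<n. cnj (y i) * Bs i)"
  define Zq where "Zq = (\<Sum>i<n. cnj (y i) * z i)"
  have main: "Jq - Rq - lam * Bq = mu * Zq"
  proof -
    have "(\<Sum>i<n. cnj (y i) * (Jy i - Ry i - lam * Bs i)) = (\<Sum>i<n. cnj (y i) * (mu * z i))"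
      using E by simp
    then show ?thesis unfolding Jq_def Rq_def Bq_def Zq_def
      by (simp add: right_diff_distrib sum_subtractf sum_distrib_left mult.left_commute)
  qed
  define \<sigma> where "\<sigma> = (\<Sum>l<m. (cmod (s l))\<^sup>2)"
  have sig: "\<sigma> \<ge> 0" unfolding \<sigma>_def by (simp add: sum_nonneg)
  have Bq: "Bq = of_real \<sigma>"
  proof -
    have "Bq = (\<Sum>l<m. (\<Sum>i<n. cnj (y i) * of_real (B $$ (i,l))) * s l)"
      unfolding Bq_def Bs_def by (rule sum_swap_mult)
    also have "\<dots> = (\<Sum>l<m. cnj (s l) * s l)"
      unfolding s_def by (simp add: cnj_sum mult.commute)
    also have "\<dots> = of_real \<sigma>" unfolding \<sigma>_def of_real_sum
      by (rule sum.cong[OF refl]) (subst complex_norm_square, simp add: mult.commute)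
    finally show ?thesis .
  qed
  have ReJ: "Re Jq = 0"
  proof -
    have "Re Jq = (\<Sum>i<n. \<Sum>k<n. J $$ (i,k) * (Re (y i) * Re (y k) + Im (y i) * Im (y k)))"
      unfolding Jq_def Jy_def by (rule re_quad)
    also have "\<dots> = 0"
    proof (rule antisym_sum_zero)
      fix i k assume "i < n" "k < n"
      then have "J $$ (i,k) = - J $$ (k,i)" by (rule skew_entry[OF Jc Js])
      then show "J $$ (i,k) * (Re (y i) * Re (y k) + Im (y i) * Im (y k))
         = - (J $$ (k,i) * (Re (y k) * Re (y i) + Im (y k) * Im (y i)))"
        by (simp add: algebra_simps)
    qed
    finally show ?thesis .
  qed
  define \<rho>a where "\<rho>a = qf n R (\<lambda>k. Re (y k))"
  define \<rho>b where "\<rho>b = qf n R (\<lambda>k. Im (y k))"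
  have ReR: "Re Rq = \<rho>a + \<rho>b" unfolding Rq_def Ry_def \<rho>a_def \<rho>b_def by (rule re_quad_qf)
  have ra: "\<rho>a \<ge> 0" "\<rho>b \<ge> 0" unfolding \<rho>a_def \<rho>b_def using psd_nonneg[OF R] by auto
  have Zq_eq: "Zq = (\<Sum>i<n. cnj (z i) * (\<Sum>k<n. of_real (Q $$ (i,k)) * z k))"
  proof -
    have "Zq = (\<Sum>i<n. (\<Sum>j<n. of_real (Q $$ (i,j)) * cnj (z j)) * z i)"
      unfolding Zq_def y_def by (simp add: cnj_sum)
    also have "\<dots> = (\<Sum>i<n. \<Sum>j<n. of_real (Q $$ (j,i)) * cnj (z j) * z i)"
    proof (rule sum.cong[OF refl])
      fix i assume i: "i \<in> {..<n}"
      show "(\<Sum>j<n. of_real (Q $$ (i,j)) * cnj (z j)) * z i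
          = (\<Sum>j<n. of_real (Q $$ (j,i)) * cnj (z j) * z i)"
        unfolding sum_distrib_right
      proof (rule sum.cong[OF refl])
        fix j assume j: "j \<in> {..<n}"
        have "Q $$ (i,j) = Q $$ (j,i)" by (rule sym_entry[OF Qc Qs]) (use i j in auto)
        then show "of_real (Q $$ (i,j)) * cnj (z j) * z i = of_real (Q $$ (j,i)) * cnj (z j) * z i"
          by simp
      qed
    qed
    also have "\<dots> = (\<Sum>j<n. \<Sum>i<n. of_real (Q $$ (j,i)) * cnj (z j) * z i)" by (rule sum.swap)
    also have "\<dots> = (\<Sum>i<n. cnj (z i) * (\<Sum>k<n. of_real (Q $$ (i,k)) * z k))"
      by (simp add: sum_distrib_left mult.commute mult.left_commute)
    finally show ?thesis .
  qed
  have ImZ: "Im Zq = 0"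
  proof -
    have "Im Zq = (\<Sum>i<n. \<Sum>k<n. Q $$ (i,k) * (Re (z i) * Im (z k) - Im (z i) * Re (z k)))"
      unfolding Zq_eq by (simp add: Im_sum sum_distrib_left algebra_simps)
    also have "\<dots> = 0"
    proof (rule antisym_sum_zero)
      fix i k assume "i < n" "k < n"
      then have "Q $$ (i,k) = Q $$ (k,i)" by (rule sym_entry[OF Qc Qs])
      then show "Q $$ (i,k) * (Re (z i) * Im (z k) - Im (z i) * Re (z k))
         = - (Q $$ (k,i) * (Re (z k) * Im (z i) - Im (z k) * Re (z i)))"
        by (simp add: algebra_simps)
    qed
    finally show ?thesis .
  qed
  have Qpsd: "pos_semidef n Q"
  proof -
    have "0 \<le> scalar_prod x (Q *\<^sub>v x)" if x: "x \<in> carrier_vec n" for x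
    proof (cases "x = 0\<^sub>v n")
      case True then show ?thesis using Qc by simp
    next
      case False then show ?thesis using Q x unfolding pos_def_def by (auto intro: less_imp_le)
    qed
    then show ?thesis unfolding pos_semidef_def using Qc Qs by auto
  qed
  have ReZ: "Re Zq \<ge> 0"
    unfolding Zq_eq re_quad_qf using psd_nonneg[OF Qpsd] by (simp add: add_nonneg_nonneg)
  have "Re (Jq - Rq - lam * Bq) = Re (mu * Zq)" using main by simp
  then have "- (\<rho>a + \<rho>b) - Re lam * \<sigma> = Re mu * Re Zq"
    using ReJ ReR ImZ Bq by simp
  moreover have "Re mu * Re Zq \<ge> 0" using mu0 ReZ by simp
  ultimately have key: "\<rho>a + \<rho>b + Re lam * \<sigma> \<le> 0" by linarith
  have "Re lam * \<sigma> \<ge> 0" using lam sig by simp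
  then have r0: "\<rho>a = 0" "\<rho>b = 0" and "Re lam * \<sigma> = 0" using key ra by linarith+
  then have s0: "\<sigma> = 0" using lam by simp
  have sl: "s l = 0" if "l < m" for l
  proof -
    have "\<forall>l\<in>{..<m}. (cmod (s l))\<^sup>2 = 0"
      using s0 unfolding \<sigma>_def by (subst sum_nonneg_eq_0_iff[symmetric]) auto
    then show ?thesis using that by auto
  qed
  have Ry0: "Ry i = 0" if i: "i < n" for i
  proof -
    have a: "(\<Sum>k<n. R $$ (i,k) * Re (y k)) = 0" using psd_zero[OF R r0(1)[unfolded \<rho>a_def] i] .
    have b: "(\<Sum>k<n. R $$ (i,k) * Im (y k)) = 0" using psd_zero[OF R r0(2)[unfolded \<rho>b_def] i] .
    show ?thesis unfolding Ry_def using a b by (simp add: complex_eq_iff Re_sum Im_sum)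
  qed
  have Bs0: "Bs i = 0" for i unfolding Bs_def using sl by simp
  have Azmu: "(\<Sum>j<n. of_real (A $$ (i,j)) * z j) = mu * z i" if i: "i < n" for i
    using Az2[OF i] E[OF i] Ry0[OF i] Bs0[of i] by simp
  have Cz0: "(\<Sum>j<n. of_real (C $$ (l,j)) * z j) = 0" if "l < m" for l
    using Cz[OF that] sl[OF that] by simp
  define cv where "cv = Matrix.vec n (\<lambda>j. Re (z j))"
  define dv where "dv = Matrix.vec n (\<lambda>j. Im (z j))"
  have cvc: "cv \<in> carrier_vec n" and dvc: "dv \<in> carrier_vec n" unfolding cv_def dv_def by auto
  have mv: "(X *\<^sub>v Matrix.vec n f) $ i = (\<Sum>j<n. X $$ (i,j) * f j)"
    if "X \<in> carrier_mat k n" "i < k" for X :: "real mat" and f i k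
    using that by (simp add: scalar_prod_def atLeast0LessThan row_def)
  have Acv: "A *\<^sub>v cv = Re mu \<cdot>\<^sub>v cv + (- Im mu) \<cdot>\<^sub>v dv"
  proof (rule eq_vecI)
    fix i assume "i < dim_vec (Re mu \<cdot>\<^sub>v cv + (- Im mu) \<cdot>\<^sub>v dv)"
    then have i: "i < n" using dvc by simp
    have "(A *\<^sub>v cv) $ i = Re (\<Sum>j<n. of_real (A $$ (i,j)) * z j)"
      unfolding cv_def mv[OF Ac i] by (simp add: Re_sum)
    also have "\<dots> = Re mu * Re (z i) - Im mu * Im (z i)" using Azmu[OF i] by simp
    finally show "(A *\<^sub>v cv) $ i = (Re mu \<cdot>\<^sub>v cv + (- Im mu) \<cdot>\<^sub>v dv) $ i"
      using i unfolding cv_def dv_def by simp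
  qed (use Ac dvc in simp)
  have Adv: "A *\<^sub>v dv = Im mu \<cdot>\<^sub>v cv + Re mu \<cdot>\<^sub>v dv"
  proof (rule eq_vecI)
    fix i assume "i < dim_vec (Im mu \<cdot>\<^sub>v cv + Re mu \<cdot>\<^sub>v dv)"
    then have i: "i < n" using dvc by simp
    have "(A *\<^sub>v dv) $ i = Im (\<Sum>j<n. of_real (A $$ (i,j)) * z j)"
      unfolding dv_def mv[OF Ac i] by (simp add: Im_sum)
    also have "\<dots> = Im mu * Re (z i) + Re mu * Im (z i)" using Azmu[OF i] by simp
    finally show "(A *\<^sub>v dv) $ i = (Im mu \<cdot>\<^sub>v cv + Re mu \<cdot>\<^sub>v dv) $ i"
      using i unfolding cv_def dv_def by simp
  qed (use Ac dvc in simp)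
  have Ccv: "C *\<^sub>v cv = 0\<^sub>v m"
  proof (rule eq_vecI)
    fix l assume "l < dim_vec (0\<^sub>v m :: real Matrix.vec)"
    then have l: "l < m" by simp
    have "(C *\<^sub>v cv) $ l = Re (\<Sum>j<n. of_real (C $$ (l,j)) * z j)"
      unfolding cv_def mv[OF Cc l] by (simp add: Re_sum)
    then show "(C *\<^sub>v cv) $ l = 0\<^sub>v m $ l" using Cz0[OF l] l by simp
  qed (use Cc in simp)
  have Cdv: "C *\<^sub>v dv = 0\<^sub>v m"
  proof (rule eq_vecI)
    fix l assume "l < dim_vec (0\<^sub>v m :: real Matrix.vec)"
    then have l: "l < m" by simp
    have "(C *\<^sub>v dv) $ l = Im (\<Sum>j<n. of_real (C $$ (l,j)) * z j)"
      unfolding dv_def mv[OF Cc l] by (simp add: Im_sum)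
    then show "(C *\<^sub>v dv) $ l = 0\<^sub>v m $ l" using Cz0[OF l] l by simp
  qed (use Cc in simp)
  have pow: "(C * A ^\<^sub>m k) *\<^sub>v cv = 0\<^sub>v m \<and> (C * A ^\<^sub>m k) *\<^sub>v dv = 0\<^sub>v m" for k
  proof (induct k)
    case 0
    show ?case using Ccv Cdv Cc Ac by simp
  next
    case (Suc k)
    have Pk: "A ^\<^sub>m k \<in> carrier_mat n n" using Ac by simp
    have CPk: "C * A ^\<^sub>m k \<in> carrier_mat m n" using Cc Pk by simp
    have eqm: "C * A ^\<^sub>m Suc k = (C * A ^\<^sub>m k) * A"
      using Cc Pk Ac by (simp add: assoc_mult_mat[of C m n _ n A n])
    have "(C * A ^\<^sub>m Suc k) *\<^sub>v cv = (C * A ^\<^sub>m k) *\<^sub>v (A *\<^sub>v cv)"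
      unfolding eqm using CPk Ac cvc by (simp add: assoc_mult_mat_vec)
    also have "\<dots> = Re mu \<cdot>\<^sub>v ((C * A ^\<^sub>m k) *\<^sub>v cv) + (- Im mu) \<cdot>\<^sub>v ((C * A ^\<^sub>m k) *\<^sub>v dv)"
      unfolding Acv using CPk cvc dvc by (simp add: mult_add_distrib_mat_vec mult_mat_vec)
    also have "\<dots> = 0\<^sub>v m" using Suc by (auto intro!: eq_vecI)
    finally have c: "(C * A ^\<^sub>m Suc k) *\<^sub>v cv = 0\<^sub>v m" .
    have "(C * A ^\<^sub>m Suc k) *\<^sub>v dv = (C * A ^\<^sub>m k) *\<^sub>v (A *\<^sub>v dv)"
      unfolding eqm using CPk Ac dvc by (simp add: assoc_mult_mat_vec)
    also have "\<dots> = Im mu \<cdot>\<^sub>v ((C * A ^\<^sub>m k) *\<^sub>v cv) + Re mu \<cdot>\<^sub>v ((C * A ^\<^sub>m k) *\<^sub>v dv)"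
      unfolding Adv using CPk cvc dvc by (simp add: mult_add_distrib_mat_vec mult_mat_vec)
    also have "\<dots> = 0\<^sub>v m" using Suc by (auto intro!: eq_vecI)
    finally show ?case using c by simp
  qed
  have "cv = 0\<^sub>v n" using obs cvc pow Cc unfolding observable_def by auto
  moreover have "dv = 0\<^sub>v n" using obs dvc pow Cc unfolding observable_def by auto
  ultimately have "Re (z i0) = 0" "Im (z i0) = 0"
    using nz(1) unfolding cv_def dv_def by (metis index_vec index_zero_vec(1))+
  then show False using nz(2) by (simp add: complex_eq_iff)
qed


lemma hurwitz_ode:
  fixes F :: "complex mat" and x :: "real \<Rightarrow> nat \<Rightarrow> complex"
  assumes F: "F \<in> carrier_mat K K"
    and ev: "\<And>\<mu>. eigenvalue F \<mu> \<Longrightarrow> Re \<mu> < 0"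
    and der: "\<And>t k. t > 0 \<Longrightarrow> k < K \<Longrightarrow>
       ((\<lambda>s. x s k) has_vector_derivative (\<Sum>l<K. F $$ (k,l) * x t l)) (at t)"
    and k: "k < K"
  shows "((\<lambda>t. x t k) \<longlongrightarrow> 0) at_top"
proof -
  obtain es where cp: "char_poly F = (\<Prod>a\<leftarrow>es. [:- a, 1:])"
    using char_poly_factorized[OF F] by auto
  obtain B P Q where sd: "schur_decomposition F es = (B,P,Q)"
    by (cases "schur_decomposition F es") auto
  from schur_decomposition[OF F cp sd] have sim: "similar_mat_wit F B P Q"
    and ut: "upper_triangular B" and dg: "diag_mat B = es" by auto
  from sim F have B: "B \<in> carrier_mat K K" and P: "P \<in> carrier_mat K K"
    and Q: "Q \<in> carrier_mat K K" and PQ: "P * Q = 1\<^sub>m K" and QP: "Q * P = 1\<^sub>m K"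
    and FPBQ: "F = P * B * Q"
    unfolding similar_mat_wit_def Let_def by auto
  have Bev: "Re (B $$ (i,i)) < 0" if i: "i < K" for i
  proof -
    have "B $$ (i,i) \<in> set es" using i B unfolding dg[symmetric] diag_mat_def by auto
    then have "poly (char_poly F) (B $$ (i,i)) = 0" unfolding cp by (rule linear_poly_root)
    then have "eigenvalue F (B $$ (i,i))" using eigenvalue_root_char_poly[OF F] by auto
    then show ?thesis by (rule ev)
  qed
  have QF: "Q * F = B * Q"
  proof -
    have "Q * F = Q * (P * B * Q)" using FPBQ by simp
    also have "\<dots> = (Q * P) * B * Q" using P B Q
      by (simp add: assoc_mult_mat[of _ K K _ K _ K])
    also have "\<dots> = B * Q" using QP B Q by simp
    finally show ?thesis .
  qed
  have QFe: "(\<Sum>k<K. Q $$ (i,k) * F $$ (k,l)) = (\<Sum>j<K. B $$ (i,j) * Q $$ (j,l))"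
    if "i < K" "l < K" for i l
    using mat_mult_entry_sum[OF Q F that] mat_mult_entry_sum[OF B Q that] QF by simp
  define y where "y t i = (\<Sum>k<K. Q $$ (i,k) * x t k)" for t i
  have dy: "((\<lambda>s. y s i) has_vector_derivative (\<Sum>j<K. B $$ (i,j) * y t j)) (at t)"
    if t: "t > 0" and i: "i < K" for t i
  proof -
    have D: "((\<lambda>s. y s i) has_vector_derivative
        (\<Sum>k<K. Q $$ (i,k) * (\<Sum>l<K. F $$ (k,l) * x t l))) (at t)"
      unfolding y_def
      by (intro has_vector_derivative_sum has_vector_derivative_mult_right der[OF t]) auto
    have "(\<Sum>k<K. Q $$ (i,k) * (\<Sum>l<K. F $$ (k,l) * x t l))
        = (\<Sum>l<K. (\<Sum>k<K. Q $$ (i,k) * F $$ (k,l)) * x t l)"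
      by (rule sum_swap_mult)
    also have "\<dots> = (\<Sum>l<K. (\<Sum>j<K. B $$ (i,j) * Q $$ (j,l)) * x t l)"
      using QFe i by simp
    also have "\<dots> = (\<Sum>j<K. B $$ (i,j) * y t j)"
      unfolding y_def by (rule sum_swap_mult[symmetric])
    finally show ?thesis using D by simp
  qed
  have split: "(\<Sum>j<K. B $$ (i,j) * y t j) = B $$ (i,i) * y t i + (\<Sum>j\<in>{Suc i..<K}. B $$ (i,j) * y t j)"
    if i: "i < K" for i t
  proof -
    have "(\<Sum>j<K. B $$ (i,j) * y t j) = (\<Sum>j\<in>{i..<K}. B $$ (i,j) * y t j)"
    proof (rule sum.mono_neutral_right)
      show "\<forall>j\<in>{..<K} - {i..<K}. B $$ (i,j) * y t j = 0"
        using ut B i unfolding upper_triangular_def by auto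
    qed auto
    also have "\<dots> = B $$ (i,i) * y t i + (\<Sum>j\<in>{Suc i..<K}. B $$ (i,j) * y t j)"
      using i by (simp add: sum.atLeast_Suc_lessThan)
    finally show ?thesis .
  qed
  have ylim: "((\<lambda>t. y t i) \<longlongrightarrow> 0) at_top" if "i < K" for i
    using that
  proof (induct i rule: measure_induct_rule[of "\<lambda>i. K - i"])
    case (less i)
    have g: "((\<lambda>t. \<Sum>j\<in>{Suc i..<K}. B $$ (i,j) * y t j) \<longlongrightarrow> 0) at_top"
    proof (rule tendsto_null_sum)
      fix j assume j: "j \<in> {Suc i..<K}"
      then have "((\<lambda>t. y t j) \<longlongrightarrow> 0) at_top" using less by auto
      then show "((\<lambda>t. B $$ (i,j) * y t j) \<longlongrightarrow> 0) at_top"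
        by (rule tendsto_mult_right_zero)
    qed
    show ?case
    proof (rule decay_complex[OF Bev[OF less(2)] g])
      fix t :: real assume t: "t > 0"
      show "((\<lambda>t. y t i) has_vector_derivative
          B $$ (i,i) * y t i + (\<Sum>j\<in>{Suc i..<K}. B $$ (i,j) * y t j)) (at t)"
        using dy[OF t less(2)] split[OF less(2)] by simp
    qed
  qed
  have xe: "x t k = (\<Sum>i<K. P $$ (k,i) * y t i)" for t
  proof -
    have "(\<Sum>i<K. P $$ (k,i) * y t i) = (\<Sum>l<K. (\<Sum>i<K. P $$ (k,i) * Q $$ (i,l)) * x t l)"
      unfolding y_def by (rule sum_swap_mult)
    also have "\<dots> = (\<Sum>l<K. (if k = l then 1 else 0) * x t l)"
    proof (rule sum.cong[OF refl])
      fix l assume l: "l \<in> {..<K}"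
      have "(\<Sum>i<K. P $$ (k,i) * Q $$ (i,l)) = (P * Q) $$ (k,l)"
        using mat_mult_entry_sum[OF P Q k] l by simp
      also have "\<dots> = (if k = l then 1 else 0)" using PQ k l by simp
      finally show "(\<Sum>i<K. P $$ (k,i) * Q $$ (i,l)) * x t l = (if k = l then 1 else 0) * x t l"
        by simp
    qed
    also have "\<dots> = (\<Sum>l<K. if k = l then x t l else 0)" by (rule sum.cong) auto
    also have "\<dots> = x t k" using k by (simp add: sum.delta)
    finally show ?thesis by simp
  qed
  have "((\<lambda>t. \<Sum>i<K. P $$ (k,i) * y t i) \<longlongrightarrow> 0) at_top"
    by (intro tendsto_null_sum tendsto_mult_right_zero ylim) auto
  then show ?thesis unfolding xe[symmetric] .
qed


lemma walk_succ: "is_walk adj N vs \<longleftrightarrow> vs \<noteq> [] \<and> set vs \<subseteq> {0..<N} \<and> successively adj vs"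
  unfolding is_walk_def successively_conv_nth by auto

lemma simple_walk:
  assumes "is_walk adj N vs"
  shows "\<exists>vs'. is_walk adj N vs' \<and> distinct vs' \<and> hd vs' = hd vs \<and> last vs' = last vs"
  using assms
proof (induct "length vs" arbitrary: vs rule: less_induct)
  case less
  show ?case
  proof (cases "distinct vs")
    case True then show ?thesis using less(2) by blast
  next
    case False
    then obtain xs y ys zs where vs: "vs = xs @ [y] @ ys @ [y] @ zs"
      using not_distinct_decomp by blast
    define vs2 where "vs2 = xs @ [y] @ zs"
    have w: "vs \<noteq> []" "set vs \<subseteq> {0..<N}" "successively adj vs"
      using less(2) unfolding walk_succ by auto
    have s1: "successively adj (xs @ [y])"
      using w(3) unfolding vs by (simp add: successively_append_iff)
    have s2: "successively adj ([y] @ zs)"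
      using w(3) unfolding vs
      by (metis append_assoc successively_append_iff)
    have "successively adj ((xs @ [y]) @ zs)"
      using s1 s2 by (cases zs) (auto simp only: successively_append_iff, auto)
    then have "successively adj vs2" unfolding vs2_def by simp
    moreover have "set vs2 \<subseteq> {0..<N}" using w(2) unfolding vs vs2_def by auto
    ultimately have wk: "is_walk adj N vs2" unfolding walk_succ vs2_def by auto
    have len: "length vs2 < length vs" unfolding vs vs2_def by simp
    have hd: "hd vs2 = hd vs" unfolding vs vs2_def by (cases xs) auto
    have lst: "last vs2 = last vs" unfolding vs vs2_def by (cases zs rule: rev_cases) auto
    from less(1)[OF len wk] hd lst show ?thesis by metis
  qed
qed

lemma und_adj_sym: "und_adj w x y \<Longrightarrow> und_adj w y x"
  unfolding und_adj_def by auto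

lemma edge_in_T:
  assumes tree: "ugraph_tree (und_adj w) N"
    and Tarcs: "T \<subseteq> arcs w N"
    and w_nonneg: "\<forall>i < N. \<forall>j < N. i \<noteq> j \<longrightarrow> w i j \<ge> 0"
    and Ttree: "ugraph_tree (\<lambda>a b. (a, b) \<in> T \<or> (b, a) \<in> T) N"
    and x: "x < N" and y: "y < N" and xy: "und_adj w x y"
  shows "(x, y) \<in> T \<or> (y, x) \<in> T"
proof (rule ccontr)
  assume nT: "\<not> ((x, y) \<in> T \<or> (y, x) \<in> T)"
  let ?a = "\<lambda>a b. (a, b) \<in> T \<or> (b, a) \<in> T"
  obtain vs where vs: "is_walk ?a N vs" "hd vs = x" "last vs = y"
    using Ttree x y unfolding ugraph_tree_def ugraph_connected_def by blast
  then obtain vs' where vs': "is_walk ?a N vs'" "distinct vs'" "hd vs' = x" "last vs' = y"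
    using simple_walk[OF vs(1)] vs(2,3) by auto
  have xney: "x \<noteq> y" using xy unfolding und_adj_def by auto
  have ne: "vs' \<noteq> []" using vs' unfolding is_walk_def by auto
  have len2: "length vs' \<ge> 2"
  proof (rule ccontr)
    assume "\<not> length vs' \<ge> 2"
    then have "length vs' = 1" using ne by (cases vs') (auto simp: Suc_le_eq)
    then obtain z where "vs' = [z]" by (cases vs') auto
    then show False using vs' xney by auto
  qed
  have len3: "length vs' \<ge> 3"
  proof (rule ccontr)
    assume "\<not> length vs' \<ge> 3"
    then have l2: "length vs' = 2" using len2 by auto
    then obtain a b where ab: "vs' = [a, b]"
      by (cases vs'; cases "tl vs'") auto
    then have "?a a b" using vs'(1) unfolding is_walk_def by (auto dest: spec[of _ 0])
    then show False using nT vs' ab by auto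
  qed
  have adjw: "und_adj w a b" if "?a a b" for a b
  proof -
    from that have "(a,b) \<in> arcs w N \<or> (b,a) \<in> arcs w N" using Tarcs by auto
    then show ?thesis unfolding arcs_def und_adj_def using w_nonneg by fastforce
  qed
  have "is_walk (und_adj w) N vs'"
    using vs'(1) adjw unfolding is_walk_def by blast
  moreover have "und_adj w (last vs') (hd vs')" using vs' xy und_adj_sym by auto
  ultimately have "is_cycle (und_adj w) N vs'"
    unfolding is_cycle_def using len3 vs'(2) by auto
  then show False using tree unfolding ugraph_tree_def by auto
qed

lemma root_reach:
  assumes Ttree: "ugraph_tree (\<lambda>a b. (a, b) \<in> T \<or> (b, a) \<in> T) N"
    and uniq: "\<forall>v < N. v \<noteq> r \<longrightarrow> (\<exists>!u. (u, v) \<in> T)"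
    and root: "\<forall>u. (u, r) \<notin> T"
    and r: "r < N"
    and closed: "\<And>u v. (u, v) \<in> T \<Longrightarrow> v \<in> S \<Longrightarrow> u \<in> S"
    and s: "s \<in> S" "s < N"
  shows "r \<in> S"
proof -
  let ?a = "\<lambda>a b. (a, b) \<in> T \<or> (b, a) \<in> T"
  obtain vs0 where vs0: "is_walk ?a N vs0" "hd vs0 = s" "last vs0 = r"
    using Ttree s r unfolding ugraph_tree_def ugraph_connected_def by blast
  then obtain vs where vs: "is_walk ?a N vs" "distinct vs" "hd vs = s" "last vs = r"
    using simple_walk[OF vs0(1)] by auto
  define L where "L = length vs"
  have ne: "vs \<noteq> []" using vs unfolding is_walk_def by auto
  then have L1: "L \<ge> 1" unfolding L_def by (cases vs) auto
  have lastL: "vs ! (L - 1) = r" using vs(4) ne unfolding L_def by (simp add: last_conv_nth)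
  have hd0: "vs ! 0 = s" using vs(3) ne by (simp add: hd_conv_nth)
  have inN: "vs ! l < N" if "l < L" for l
    using vs(1) that unfolding is_walk_def L_def by (auto dest: nth_mem)
  have adjl: "?a (vs ! l) (vs ! Suc l)" if "Suc l < L" for l
    using vs(1) that unfolding is_walk_def L_def by auto
  have bk: "\<forall>l. Suc l < L \<longrightarrow> L - 2 - l = d \<longrightarrow> (vs ! Suc l, vs ! l) \<in> T" for d
  proof (induct d)
    case 0
    show ?case
    proof (intro allI impI)
      fix l assume l: "Suc l < L" "L - 2 - l = 0"
      then have "Suc l = L - 1" by auto
      then have "vs ! Suc l = r" using lastL by simp
      then show "(vs ! Suc l, vs ! l) \<in> T" using adjl[OF l(1)] root by auto
    qed
  next
    case (Suc d)
    show ?case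
    proof (intro allI impI)
      fix l assume l: "Suc l < L" "L - 2 - l = Suc d"
      then have l2: "Suc (Suc l) < L" by auto
      have p: "(vs ! Suc (Suc l), vs ! Suc l) \<in> T" using Suc l2 l(2) by auto
      then have nr: "vs ! Suc l \<noteq> r" using root by metis
      show "(vs ! Suc l, vs ! l) \<in> T"
      proof (rule ccontr)
        assume "(vs ! Suc l, vs ! l) \<notin> T"
        then have "(vs ! l, vs ! Suc l) \<in> T" using adjl[OF l(1)] by auto
        then have "vs ! l = vs ! Suc (Suc l)"
          using uniq inN[OF l(1)] nr p by metis
        then show False using vs(2) l2 unfolding L_def by (simp add: nth_eq_iff_index_eq)
      qed
    qed
  qed
  have fwd: "l < L \<Longrightarrow> vs ! l \<in> S" for l
  proof (induct l)
    case 0 then show ?case using hd0 s by simp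
  next
    case (Suc l)
    then have "(vs ! Suc l, vs ! l) \<in> T" using bk by auto
    then show ?case using Suc closed by auto
  qed
  show ?thesis using fwd[of "L - 1"] lastL L1 by simp
qed


lemma lap_sum_diff:
  fixes L :: "nat \<Rightarrow> nat \<Rightarrow> real"
  assumes rowsum: "(\<Sum>q<M. L p q) = 0" and p: "p < M"
  shows "(\<Sum>q<M. L p q * x q) = (\<Sum>q\<in>{..<M} - {p}. L p q * (x q - x p))"
proof -
  have "(\<Sum>q<M. L p q * x q) = (\<Sum>q<M. L p q * (x q - x p)) + x p * (\<Sum>q<M. L p q)"
    by (simp add: algebra_simps sum.distrib sum_distrib_left sum_subtractf)
  also have "\<dots> = (\<Sum>q<M. L p q * (x q - x p))" using rowsum by simp
  also have "\<dots> = (\<Sum>q\<in>{..<M} - {p}. L p q * (x q - x p))"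
    using p by (subst sum.remove[of _ p]) auto
  finally show ?thesis .
qed

lemma lap_min_nonpos:
  fixes L :: "nat \<Rightarrow> nat \<Rightarrow> real"
  assumes rowsum: "(\<Sum>q<M. L p q) = 0" and p: "p < M"
    and offd: "\<And>q. q < M \<Longrightarrow> q \<noteq> p \<Longrightarrow> L p q \<le> 0"
    and min: "\<And>q. q < M \<Longrightarrow> x p \<le> x q"
  shows "(\<Sum>q<M. L p q * x q) \<le> 0"
    and "(\<Sum>q<M. L p q * x q) = 0 \<Longrightarrow> q < M \<Longrightarrow> q \<noteq> p \<Longrightarrow> L p q < 0 \<Longrightarrow> x q = x p"
proof -
  have nonpos: "\<forall>q\<in>{..<M} - {p}. L p q * (x q - x p) \<le> 0"
    using offd min by (auto intro: mult_nonpos_nonneg)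
  show "(\<Sum>q<M. L p q * x q) \<le> 0"
    unfolding lap_sum_diff[where L=L and p=p and M=M, OF rowsum p] by (rule sum_nonpos) (use nonpos in auto)
  assume z: "(\<Sum>q<M. L p q * x q) = 0" and q: "q < M" "q \<noteq> p" "L p q < 0"
  have "(\<Sum>q\<in>{..<M} - {p}. - (L p q * (x q - x p))) = 0"
    using z unfolding lap_sum_diff[where L=L and p=p and M=M, OF rowsum p] by (simp add: sum_negf)
  then have all0: "\<forall>q'\<in>{..<M} - {p}. - (L p q' * (x q' - x p)) = 0"
    using nonpos by (subst sum_nonneg_eq_0_iff[symmetric]) auto
  have "q \<in> {..<M} - {p}" using q by auto
  then have "L p q * (x q - x p) = 0" using all0 by fastforce
  then show "x q = x p" using q by auto
qed

lemma obtain_min: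
  fixes x :: "nat \<Rightarrow> real"
  assumes "M > 0"
  obtains p where "p < M" "\<And>q. q < M \<Longrightarrow> x p \<le> x q"
proof -
  have "Min (x ` {..<M}) \<in> x ` {..<M}" using assms by (intro Min_in) auto
  then obtain p where p: "p < M" "x p = Min (x ` {..<M})" by auto
  have "x p \<le> x q" if "q < M" for q using p that by auto
  then show ?thesis using that p by blast
qed

lemma lap_no_one:
  fixes L :: "nat \<Rightarrow> nat \<Rightarrow> real"
  assumes rowsum: "\<And>p. p < M \<Longrightarrow> (\<Sum>q<M. L p q) = 0"
    and offd: "\<And>p q. p < M \<Longrightarrow> q < M \<Longrightarrow> q \<noteq> p \<Longrightarrow> L p q \<le> 0"
    and M: "M > 0"
  shows "\<exists>p<M. (\<Sum>q<M. L p q * x q) \<noteq> 1"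
proof -
  obtain p where p: "p < M" "\<And>q. q < M \<Longrightarrow> x p \<le> x q" using obtain_min[OF M] by metis
  have "(\<Sum>q<M. L p q * x q) \<le> 0"
    by (rule lap_min_nonpos(1)[where L=L and p=p and M=M, OF rowsum[OF p(1)] p(1)]) (use offd p in auto)
  then show ?thesis using p by force
qed

lemma lap_kernel:
  fixes L :: "nat \<Rightarrow> nat \<Rightarrow> real"
  assumes rowsum: "\<And>p. p < M \<Longrightarrow> (\<Sum>q<M. L p q) = 0"
    and offd: "\<And>p q. p < M \<Longrightarrow> q < M \<Longrightarrow> q \<noteq> p \<Longrightarrow> L p q \<le> 0"
    and reach: "\<And>S. S \<subseteq> {..<M} \<Longrightarrow> S \<noteq> {} \<Longrightarrow>
        (\<And>p q. p \<in> S \<Longrightarrow> q < M \<Longrightarrow> p \<noteq> q \<Longrightarrow> L p q < 0 \<Longrightarrow> q \<in> S) \<Longrightarrow> r \<in> S"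
    and r: "r < M"
    and ker: "\<And>p. p < M \<Longrightarrow> (\<Sum>q<M. L p q * x q) = 0"
  shows "p < M \<Longrightarrow> x p = x r"
proof -
  have M: "M > 0" using r by auto
  have minr: "x r \<le> x q"
    if "q < M" and ker: "\<And>p. p < M \<Longrightarrow> (\<Sum>q<M. L p q * x q) = 0"
    for q and x :: "nat \<Rightarrow> real"
  proof -
    obtain p where p: "p < M" "\<And>q. q < M \<Longrightarrow> x p \<le> x q" using obtain_min[OF M] by metis
    define S where "S = {p'. p' < M \<and> x p' = x p}"
    have "r \<in> S"
    proof (rule reach)
      show "S \<subseteq> {..<M}" unfolding S_def by auto
      show "S \<noteq> {}" using p unfolding S_def by auto
      fix p' q assume p': "p' \<in> S" "q < M" "p' \<noteq> q" "L p' q < 0"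
      have min': "x p' \<le> x q'" if "q' < M" for q' using p' p that unfolding S_def by auto
      have "x q = x p'"
        by (rule lap_min_nonpos(2)[where L=L and p=p' and M=M, OF rowsum _ _ min' ker]) (use p' offd in \<open>auto simp: S_def\<close>)
      then show "q \<in> S" using p' unfolding S_def by auto
    qed
    then show ?thesis using p that unfolding S_def by auto
  qed
  assume p: "p < M"
  have a: "x r \<le> x p" using minr[OF p, of x] ker by blast
  have "- x r \<le> - x p"
    using minr[OF p, of "\<lambda>q. - x q"] ker by (simp add: sum_negf)
  then show "x p = x r" using a by linarith
qed

lemma lap_gersh:
  fixes L :: "nat \<Rightarrow> nat \<Rightarrow> real" and x :: "nat \<Rightarrow> complex"
  assumes rowsum: "\<And>p. p < M \<Longrightarrow> (\<Sum>q<M. L p q) = 0"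
    and offd: "\<And>p q. p < M \<Longrightarrow> q < M \<Longrightarrow> q \<noteq> p \<Longrightarrow> L p q \<le> 0"
    and ev: "\<And>p. p < M \<Longrightarrow> (\<Sum>q<M. of_real (L p q) * x q) = z * x p"
    and nz: "p0 < M" "x p0 \<noteq> 0"
    and lam: "z \<noteq> 0"
  shows "Re z > 0"
proof -
  have M: "M > 0" using nz by auto
  obtain p where p: "p < M" "\<And>q. q < M \<Longrightarrow> - cmod (x p) \<le> - cmod (x q)"
    using obtain_min[OF M, of "\<lambda>q. - cmod (x q)"] by metis
  have pmax: "cmod (x q) \<le> cmod (x p)" if "q < M" for q using p(2)[OF that] by simp
  have xp: "cmod (x p) > 0" using pmax[OF nz(1)] nz by auto
  define d where "d = L p p"
  have rs: "(\<Sum>q\<in>{..<M} - {p}. L p q) = - d"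
    using rowsum[OF p(1)] p(1) unfolding d_def by (subst (asm) sum.remove[of _ p]) auto
  have d: "d \<ge> 0"
  proof -
    have "(\<Sum>q\<in>{..<M} - {p}. L p q) \<le> 0" by (rule sum_nonpos) (use offd p in auto)
    then show ?thesis using rs by simp
  qed
  have "z * x p = of_real d * x p + (\<Sum>q\<in>{..<M} - {p}. of_real (L p q) * x q)"
    using ev[OF p(1)] p(1) unfolding d_def by (subst (asm) sum.remove[of _ p]) auto
  then have e: "(z - of_real d) * x p = (\<Sum>q\<in>{..<M} - {p}. of_real (L p q) * x q)"
    by (simp add: algebra_simps)
  have "cmod ((z - of_real d) * x p) \<le> (\<Sum>q\<in>{..<M} - {p}. cmod (of_real (L p q) * x q))"
    unfolding e by (rule norm_sum)
  also have "\<dots> \<le> (\<Sum>q\<in>{..<M} - {p}. (- L p q) * cmod (x p))"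
  proof (rule sum_mono)
    fix q assume q: "q \<in> {..<M} - {p}"
    have "cmod (of_real (L p q) * x q) = (- L p q) * cmod (x q)"
      using offd[of p q] q p by (simp add: norm_mult)
    also have "\<dots> \<le> (- L p q) * cmod (x p)"
      using offd[of p q] q p pmax[of q] by (intro mult_left_mono) auto
    finally show "cmod (of_real (L p q) * x q) \<le> (- L p q) * cmod (x p)" .
  qed
  also have "\<dots> = d * cmod (x p)"
    using rs by (simp add: sum_distrib_right[symmetric] sum_negf)
  finally have "cmod (z - of_real d) * cmod (x p) \<le> d * cmod (x p)" by (simp add: norm_mult)
  then have cm: "cmod (z - of_real d) \<le> d" using xp by simp
  have "(cmod (z - of_real d))\<^sup>2 \<le> d\<^sup>2" using cm by (intro power_mono) auto
  then have "(Re z - d)\<^sup>2 + (Im z)\<^sup>2 \<le> d\<^sup>2" unfolding cmod_power2 by simp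
  then have le: "(Re z)\<^sup>2 + (Im z)\<^sup>2 \<le> 2 * d * Re z" by (simp add: power2_eq_square algebra_simps)
  have "(Re z)\<^sup>2 + (Im z)\<^sup>2 > 0" using lam complex_eq_iff[of z 0]
    by (auto simp: add_pos_nonneg add_nonneg_pos)
  then have "d * Re z > 0" using le by linarith
  then show ?thesis using d by (simp add: zero_less_mult_iff)
qed


lemma sum_blocks:
  fixes p n :: nat
  shows "(\<Sum>c<p*n. f c) = (\<Sum>q<p. \<Sum>j<n. f (q*n+j))"
proof (induct p)
  case 0 then show ?case by simp
next
  case (Suc p)
  have U: "{..<Suc p * n} = {..<p*n} \<union> {p*n..<p*n+n}" by auto
  have "(\<Sum>c<Suc p*n. f c) = sum f ({..<p*n} \<union> {p*n..<p*n+n})" by (simp only: U)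
  also have "\<dots> = (\<Sum>c<p*n. f c) + (\<Sum>c\<in>{p*n..<p*n+n}. f c)"
    by (rule sum.union_disjoint) auto
  also have "(\<Sum>c\<in>{p*n..<p*n+n}. f c) = (\<Sum>j<n. f (p*n+j))"
    by (rule sum.reindex_bij_witness[of _ "\<lambda>j. p*n+j" "\<lambda>c. c - p*n"]) auto
  finally show ?case using Suc by simp
qed

lemma sum_swap2:
  fixes a :: "nat \<Rightarrow> 'a::comm_ring_1"
  shows "(\<Sum>l<K. a l * (\<Sum>j<N. b j * v l j)) = (\<Sum>j<N. b j * (\<Sum>l<K. a l * v l j))"
proof -
  have "(\<Sum>l<K. a l * (\<Sum>j<N. b j * v l j)) = (\<Sum>l<K. \<Sum>j<N. b j * (a l * v l j))"
    by (simp add: sum_distrib_left mult.left_commute)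
  also have "\<dots> = (\<Sum>j<N. \<Sum>l<K. b j * (a l * v l j))" by (rule sum.swap)
  also have "\<dots> = (\<Sum>j<N. b j * (\<Sum>l<K. a l * v l j))" by (simp add: sum_distrib_left)
  finally show ?thesis .
qed

lemma kron_eig:
  fixes L2 :: "complex mat" and Am BC :: "nat \<Rightarrow> nat \<Rightarrow> complex" and v :: "nat \<Rightarrow> complex"
  assumes L2: "L2 \<in> carrier_mat p p"
    and H: "\<And>lam z i0. eigenvalue L2 lam \<Longrightarrow>
        (\<And>i. i < n \<Longrightarrow> (\<Sum>j<n. Am i j * z j) - lam * (\<Sum>j<n. BC i j * z j) = mu * z i) \<Longrightarrow>
        i0 < n \<Longrightarrow> z i0 \<noteq> 0 \<Longrightarrow> Re mu < 0"
    and eqv: "\<And>k i. k < p \<Longrightarrow> i < n \<Longrightarrow>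
        (\<Sum>j<n. Am i j * v (k*n+j)) - (\<Sum>q<p. L2 $$ (k,q) * (\<Sum>j<n. BC i j * v (q*n+j)))
          = mu * v (k*n+i)"
    and nz: "k1 < p" "i1 < n" "v (k1*n+i1) \<noteq> 0"
  shows "Re mu < 0"
proof -
  obtain es where cp: "char_poly L2 = (\<Prod>a\<leftarrow>es. [:- a, 1:])"
    using char_poly_factorized[OF L2] by auto
  obtain T Ps Qs where sd: "schur_decomposition L2 es = (T,Ps,Qs)"
    by (cases "schur_decomposition L2 es") auto
  from schur_decomposition[OF L2 cp sd] have sim: "similar_mat_wit L2 T Ps Qs"
    and ut: "upper_triangular T" and dg: "diag_mat T = es" by auto
  from sim L2 have T: "T \<in> carrier_mat p p" and Ps: "Ps \<in> carrier_mat p p"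
    and Qs: "Qs \<in> carrier_mat p p" and PQ: "Ps * Qs = 1\<^sub>m p" and QP: "Qs * Ps = 1\<^sub>m p"
    and LPTQ: "L2 = Ps * T * Qs"
    unfolding similar_mat_wit_def Let_def by auto
  have Tev: "eigenvalue L2 (T $$ (k,k))" if k: "k < p" for k
  proof -
    have "T $$ (k,k) \<in> set es" using k T unfolding dg[symmetric] diag_mat_def by auto
    then have "poly (char_poly L2) (T $$ (k,k)) = 0" unfolding cp by (rule linear_poly_root)
    then show ?thesis using eigenvalue_root_char_poly[OF L2] by auto
  qed
  have QL: "Qs * L2 = T * Qs"
  proof -
    have "Qs * L2 = Qs * (Ps * T * Qs)" using LPTQ by simp
    also have "\<dots> = (Qs * Ps) * T * Qs" using Ps T Qs
      by (simp add: assoc_mult_mat[of _ p p _ p _ p])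
    also have "\<dots> = T * Qs" using QP T Qs by simp
    finally show ?thesis .
  qed
  have QLe: "(\<Sum>l<p. Qs $$ (k,l) * L2 $$ (l,q)) = (\<Sum>r<p. T $$ (k,r) * Qs $$ (r,q))"
    if "k < p" "q < p" for k q
    using mat_mult_entry_sum[OF Qs L2 that] mat_mult_entry_sum[OF T Qs that] QL by simp
  define u where "u k i = (\<Sum>l<p. Qs $$ (k,l) * v (l*n+i))" for k i
  define X where "X q i = (\<Sum>j<n. BC i j * v (q*n+j))" for q i
  define Y where "Y r i = (\<Sum>j<n. BC i j * u r j)" for r i
  have ueq: "(\<Sum>j<n. Am i j * u k j) - (\<Sum>r<p. T $$ (k,r) * Y r i) = mu * u k i"
    if k: "k < p" and i: "i < n" for k i
  proof -
    have "(\<Sum>l<p. Qs $$ (k,l) * ((\<Sum>j<n. Am i j * v (l*n+j)) - (\<Sum>q<p. L2 $$ (l,q) * X q i)))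
        = (\<Sum>l<p. Qs $$ (k,l) * (mu * v (l*n+i)))"
      unfolding X_def by (rule sum.cong[OF refl]) (simp add: eqv i)
    moreover have "(\<Sum>l<p. Qs $$ (k,l) * (mu * v (l*n+i))) = mu * u k i"
      unfolding u_def by (simp add: sum_distrib_left mult.left_commute)
    moreover have "(\<Sum>l<p. Qs $$ (k,l) * (\<Sum>j<n. Am i j * v (l*n+j))) = (\<Sum>j<n. Am i j * u k j)"
      unfolding u_def by (rule sum_swap2)
    moreover have "(\<Sum>l<p. Qs $$ (k,l) * (\<Sum>q<p. L2 $$ (l,q) * X q i))
        = (\<Sum>r<p. T $$ (k,r) * Y r i)"
    proof -
      have "(\<Sum>l<p. Qs $$ (k,l) * (\<Sum>q<p. L2 $$ (l,q) * X q i))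
          = (\<Sum>q<p. (\<Sum>l<p. Qs $$ (k,l) * L2 $$ (l,q)) * X q i)"
        by (rule sum_swap_mult)
      also have "\<dots> = (\<Sum>q<p. (\<Sum>r<p. T $$ (k,r) * Qs $$ (r,q)) * X q i)"
        using QLe k by simp
      also have "\<dots> = (\<Sum>r<p. T $$ (k,r) * (\<Sum>q<p. Qs $$ (r,q) * X q i))"
        by (rule sum_swap_mult[symmetric])
      also have "\<dots> = (\<Sum>r<p. T $$ (k,r) * Y r i)"
      proof (rule sum.cong[OF refl])
        fix r
        have "(\<Sum>q<p. Qs $$ (r,q) * X q i) = Y r i"
          unfolding X_def Y_def u_def by (rule sum_swap2)
        then show "T $$ (k,r) * (\<Sum>q<p. Qs $$ (r,q) * X q i) = T $$ (k,r) * Y r i" by simp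
      qed
      finally show ?thesis .
    qed
    ultimately show ?thesis
      by (simp add: right_diff_distrib sum_subtractf)
  qed
  define S where "S = {k. k < p \<and> (\<exists>i<n. u k i \<noteq> 0)}"
  have Sne: "S \<noteq> {}"
  proof
    assume S0: "S = {}"
    then have u0: "u k i = 0" if "k < p" "i < n" for k i using that unfolding S_def by auto
    have "v (k1*n+i1) = (\<Sum>k<p. Ps $$ (k1,k) * u k i1)"
    proof -
      have "(\<Sum>k<p. Ps $$ (k1,k) * u k i1) = (\<Sum>l<p. (\<Sum>k<p. Ps $$ (k1,k) * Qs $$ (k,l)) * v (l*n+i1))"
        unfolding u_def by (rule sum_swap_mult)
      also have "\<dots> = (\<Sum>l<p. (if k1 = l then 1 else 0) * v (l*n+i1))"
      proof (rule sum.cong[OF refl])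
        fix l assume l: "l \<in> {..<p}"
        have "(\<Sum>k<p. Ps $$ (k1,k) * Qs $$ (k,l)) = (Ps * Qs) $$ (k1,l)"
          using mat_mult_entry_sum[OF Ps Qs nz(1)] l by simp
        also have "\<dots> = (if k1 = l then 1 else 0)" using PQ nz(1) l by simp
        finally show "(\<Sum>k<p. Ps $$ (k1,k) * Qs $$ (k,l)) * v (l*n+i1)
            = (if k1 = l then 1 else 0) * v (l*n+i1)" by simp
      qed
      also have "\<dots> = (\<Sum>l<p. if k1 = l then v (l*n+i1) else 0)" by (rule sum.cong) auto
      also have "\<dots> = v (k1*n+i1)" using nz(1) by (simp add: sum.delta)
      finally show ?thesis by simp
    qed
    also have "\<dots> = 0" using u0 nz by simp
    finally show False using nz(3) by simp
  qed
  have Sfin: "finite S" unfolding S_def by auto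
  define k0 where "k0 = Max S"
  have k0S: "k0 \<in> S" unfolding k0_def using Sne Sfin by (rule Max_in[rotated])
  then have k0: "k0 < p" and "\<exists>i<n. u k0 i \<noteq> 0" unfolding S_def by auto
  then obtain i0 where i0: "i0 < n" "u k0 i0 \<noteq> 0" by auto
  have above: "u r i = 0" if "k0 < r" "r < p" "i < n" for r i
  proof (rule ccontr)
    assume "u r i \<noteq> 0"
    then have "r \<in> S" using that unfolding S_def by auto
    then have "r \<le> k0" unfolding k0_def using Sfin by simp
    then show False using that by simp
  qed
  have sumT: "(\<Sum>r<p. T $$ (k0,r) * Y r i) = T $$ (k0,k0) * Y k0 i" if i: "i < n" for i
  proof -
    have "(\<Sum>r<p. T $$ (k0,r) * Y r i) = (\<Sum>r\<in>{k0}. T $$ (k0,r) * Y r i)"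
    proof (rule sum.mono_neutral_right)
      show "\<forall>r\<in>{..<p} - {k0}. T $$ (k0, r) * Y r i = 0"
      proof
        fix r assume r: "r \<in> {..<p} - {k0}"
        show "T $$ (k0, r) * Y r i = 0"
        proof (cases "r < k0")
          case True
          then have "T $$ (k0,r) = 0" using ut T k0 unfolding upper_triangular_def by auto
          then show ?thesis by simp
        next
          case False
          then have "Y r i = 0" unfolding Y_def using above r by auto
          then show ?thesis by simp
        qed
      qed
    qed (use k0 in auto)
    then show ?thesis by simp
  qed
  show ?thesis
  proof (rule H[where z="u k0", OF Tev[OF k0] _ i0])
    fix i assume i: "i < n"
    show "(\<Sum>j<n. Am i j * u k0 j) - T $$ (k0,k0) * (\<Sum>j<n. BC i j * u k0 j) = mu * u k0 i"
      using ueq[OF k0 i] sumT[OF i] unfolding Y_def by simp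
  qed
qed


lemma sum_le_single:
  fixes f :: "nat \<Rightarrow> real"
  assumes "finite A" "v \<in> A" "\<And>r. r \<in> A \<Longrightarrow> f r \<le> 0"
  shows "sum f A \<le> f v"
proof -
  have "sum f A = f v + sum f (A - {v})" using assms by (simp add: sum.remove)
  moreover have "sum f (A - {v}) \<le> 0" using assms by (intro sum_nonpos) auto
  ultimately show ?thesis by simp
qed

lemma lap_entry:
  "r < N \<Longrightarrow> s < N \<Longrightarrow> laplacian w N $$ (r,s) =
     (if r = s then (\<Sum>k \<in> {0..<N} - {r}. w r k) else - w r s)"
  unfolding laplacian_def by simp

lemma lap_rowsum:
  assumes r: "r < N"
  shows "(\<Sum>s<N. laplacian w N $$ (r,s)) = 0"
proof -
  have "(\<Sum>s<N. laplacian w N $$ (r,s)) = laplacian w N $$ (r,r) + (\<Sum>s\<in>{..<N} - {r}. laplacian w N $$ (r,s))"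
    using r by (simp add: sum.remove)
  also have "(\<Sum>s\<in>{..<N} - {r}. laplacian w N $$ (r,s)) = (\<Sum>s\<in>{..<N} - {r}. - w r s)"
    using r by (intro sum.cong) (auto simp: lap_entry)
  also have "laplacian w N $$ (r,r) = (\<Sum>s\<in>{..<N} - {r}. w r s)"
    using r by (simp add: lap_entry atLeast0LessThan)
  finally show ?thesis by (simp add: sum_negf)
qed

lemma clusterV_entry:
  "s < N \<Longrightarrow> q < N - 1 \<Longrightarrow>
   clusterV N $$ (s,q) = (if (if s < N - 2 then s else N - 2) = q then 1 else 0)"
  unfolding clusterV_def by auto

lemma clusterW_entry:
  "r < N \<Longrightarrow> p < N - 1 \<Longrightarrow>
   clusterW w N $$ (r,p) = (if (if r < N - 2 then r else N - 2) = p then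
      (if r < N - 2 then 1 else if r = N - 2 then w (N - 1) (N - 2) / (w (N - 2) (N - 1) + w (N - 1) (N - 2))
       else w (N - 2) (N - 1) / (w (N - 2) (N - 1) + w (N - 1) (N - 2))) else 0)"
  unfolding clusterW_def by auto

lemma Lh_props:
  fixes w :: "nat \<Rightarrow> nat \<Rightarrow> real" and N :: nat
  defines "Lh \<equiv> \<lambda>p q. (transpose_mat (clusterW w N) * laplacian w N * clusterV N) $$ (p,q)"
  assumes N3: "N \<ge> 3"
    and w_nonneg: "\<forall>i < N. \<forall>j < N. i \<noteq> j \<longrightarrow> w i j \<ge> 0"
    and treeA: "ugraph_tree (und_adj w) N"
    and spanA: "has_directed_rooted_spanning_tree w N"
    and adj_last: "und_adj w (N - 2) (N - 1)"
  shows "\<And>p. p < N - 1 \<Longrightarrow> (\<Sum>q<N - 1. Lh p q) = 0"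
    and "\<And>p q. p < N - 1 \<Longrightarrow> q < N - 1 \<Longrightarrow> q \<noteq> p \<Longrightarrow> Lh p q \<le> 0"
    and "\<exists>r' < N - 1. \<forall>S. S \<subseteq> {..<N - 1} \<longrightarrow> S \<noteq> {} \<longrightarrow>
          (\<forall>p q. p \<in> S \<longrightarrow> q < N - 1 \<longrightarrow> p \<noteq> q \<longrightarrow> Lh p q < 0 \<longrightarrow> q \<in> S) \<longrightarrow> r' \<in> S"
proof -
  define M where "M = N - 1"
  define \<pi> where "\<pi> s = (if s < N - 2 then s else N - 2)" for s
  define s0 where "s0 = w (N - 2) (N - 1) + w (N - 1) (N - 2)"
  define \<alpha> where "\<alpha> r = (if r < N - 2 then 1 else if r = N - 2 then w (N - 1) (N - 2) / s0
       else w (N - 2) (N - 1) / s0)" for r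
  have s0: "s0 > 0" using adj_last unfolding und_adj_def s0_def by auto
  have w01: "w (N - 2) (N - 1) \<ge> 0" "w (N - 1) (N - 2) \<ge> 0" using w_nonneg N3 by auto
  have alpha0: "\<alpha> r \<ge> 0" for r unfolding \<alpha>_def using s0 w01 by auto
  have piM: "\<pi> s < M" for s unfolding \<pi>_def M_def using N3 by auto
  have Wc: "clusterW w N \<in> carrier_mat N M" unfolding clusterW_def M_def by simp
  have Vc: "clusterV N \<in> carrier_mat N M" unfolding clusterV_def M_def by simp
  have Lc: "laplacian w N \<in> carrier_mat N N" unfolding laplacian_def by simp
  have WTc: "transpose_mat (clusterW w N) \<in> carrier_mat M N" using Wc by simp
  have WLc: "transpose_mat (clusterW w N) * laplacian w N \<in> carrier_mat M N" using WTc Lc by simp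
  define Lp where "Lp r s = laplacian w N $$ (r,s)" for r s
  have We: "clusterW w N $$ (r,p) = (if \<pi> r = p then \<alpha> r else 0)" if "r < N" "p < M" for r p
    using clusterW_entry[of r N p w] that unfolding \<pi>_def \<alpha>_def s0_def M_def by simp
  have Ve: "clusterV N $$ (s,q) = (if \<pi> s = q then 1 else 0)" if "s < N" "q < M" for s q
    using clusterV_entry[of s N q] that unfolding \<pi>_def M_def by simp
  have Lhe: "Lh p q = (\<Sum>r<N. (if \<pi> r = p then \<alpha> r else 0) * (\<Sum>s<N. Lp r s * (if \<pi> s = q then 1 else 0)))"
    if p: "p < M" and q: "q < M" for p q
  proof -
    have "Lh p q = (\<Sum>s<N. (transpose_mat (clusterW w N) * laplacian w N) $$ (p,s) * clusterV N $$ (s,q))"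
      unfolding Lh_def using mat_mult_entry_sum[OF WLc Vc p q] .
    also have "\<dots> = (\<Sum>s<N. (\<Sum>r<N. clusterW w N $$ (r,p) * Lp r s) * (if \<pi> s = q then 1 else 0))"
      by (rule sum.cong[OF refl]) (simp add: mat_mult_entry_sum[OF WTc Lc p] Ve q Wc p Lp_def carrier_matD[OF Wc] index_transpose_mat(1))
    also have "\<dots> = (\<Sum>r<N. clusterW w N $$ (r,p) * (\<Sum>s<N. Lp r s * (if \<pi> s = q then 1 else 0)))"
      by (rule sum_swap_mult[symmetric])
    also have "\<dots> = (\<Sum>r<N. (if \<pi> r = p then \<alpha> r else 0) * (\<Sum>s<N. Lp r s * (if \<pi> s = q then 1 else 0)))"
      by (rule sum.cong[OF refl]) (simp add: We p)
    finally show ?thesis .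
  qed
  have Lp_off: "Lp r s = - w r s" if "r < N" "s < N" "r \<noteq> s" for r s
    using that unfolding Lp_def by (simp add: lap_entry)
  show rowsum: "(\<Sum>q<N - 1. Lh p q) = 0" if p: "p < N - 1" for p
  proof -
    have pM: "p < M" using p unfolding M_def .
    have "(\<Sum>q<M. Lh p q) = (\<Sum>q<M. \<Sum>r<N. (if \<pi> r = p then \<alpha> r else 0) * (\<Sum>s<N. Lp r s * (if \<pi> s = q then 1 else 0)))"
      using Lhe pM by simp
    also have "\<dots> = (\<Sum>r<N. \<Sum>q<M. (if \<pi> r = p then \<alpha> r else 0) * (\<Sum>s<N. Lp r s * (if \<pi> s = q then 1 else 0)))"
      by (rule sum.swap)
    also have "\<dots> = (\<Sum>r<N. (if \<pi> r = p then \<alpha> r else 0) * (\<Sum>s<N. Lp r s))"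
    proof (rule sum.cong[OF refl])
      fix r
      have "(\<Sum>q<M. \<Sum>s<N. Lp r s * (if \<pi> s = q then 1 else 0))
          = (\<Sum>s<N. \<Sum>q<M. Lp r s * (if \<pi> s = q then 1 else 0))" by (rule sum.swap)
      also have "\<dots> = (\<Sum>s<N. Lp r s)"
      proof (rule sum.cong[OF refl])
        fix s
        have "(\<Sum>q<M. Lp r s * (if \<pi> s = q then 1 else 0)) = Lp r s * (\<Sum>q<M. (if \<pi> s = q then 1 else 0))"
          by (rule sum_distrib_left[symmetric])
        also have "(\<Sum>q<M. (if \<pi> s = q then 1 else 0)) = (1::real)" using piM[of s] by simp
        finally show "(\<Sum>q<M. Lp r s * (if \<pi> s = q then 1 else 0)) = Lp r s" by simp
      qed
      finally show "(\<Sum>q<M. (if \<pi> r = p then \<alpha> r else 0) * (\<Sum>s<N. Lp r s * (if \<pi> s = q then 1 else 0)))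
          = (if \<pi> r = p then \<alpha> r else 0) * (\<Sum>s<N. Lp r s)"
        by (simp add: sum_distrib_left[symmetric])
    qed
    also have "\<dots> = 0" using lap_rowsum unfolding Lp_def by simp
    finally show ?thesis unfolding M_def .
  qed
  have termnp: "(if \<pi> r = p then \<alpha> r else 0) * (\<Sum>s<N. Lp r s * (if \<pi> s = q then 1 else 0)) \<le> 0"
    if "r < N" "p \<noteq> q" for r p q
  proof (cases "\<pi> r = p")
    case True
    have "(\<Sum>s<N. Lp r s * (if \<pi> s = q then 1 else 0)) \<le> 0"
    proof (rule sum_nonpos)
      fix s assume s: "s \<in> {..<N}"
      show "Lp r s * (if \<pi> s = q then 1 else 0) \<le> 0"
      proof (cases "\<pi> s = q")
        case True
        then have "s \<noteq> r" using \<open>\<pi> r = p\<close> that by auto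
        then show ?thesis using Lp_off[of r s] s that w_nonneg True by auto
      qed simp
    qed
    then show ?thesis using True alpha0 by (simp add: mult_nonneg_nonpos)
  qed simp
  show offd: "Lh p q \<le> 0" if "p < N - 1" "q < N - 1" "q \<noteq> p" for p q
    unfolding Lhe[OF that(1,2)[folded M_def]] using termnp that by (intro sum_nonpos) auto
  have strict: "Lh (\<pi> v) (\<pi> u) < 0" if vu: "v < N" "u < N" "\<pi> v \<noteq> \<pi> u" "w v u > 0" "\<alpha> v > 0" for v u
  proof -
    have "Lh (\<pi> v) (\<pi> u) \<le> (if \<pi> v = \<pi> v then \<alpha> v else 0) * (\<Sum>s<N. Lp v s * (if \<pi> s = \<pi> u then 1 else 0))"
      unfolding Lhe[OF piM piM] using vu termnp by (intro sum_le_single) auto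
    also have "(\<Sum>s<N. Lp v s * (if \<pi> s = \<pi> u then 1 else 0)) \<le> Lp v u * (if \<pi> u = \<pi> u then 1 else 0)"
    proof (rule sum_le_single)
      fix s assume s: "s \<in> {..<N}"
      show "Lp v s * (if \<pi> s = \<pi> u then 1 else 0) \<le> 0"
      proof (cases "\<pi> s = \<pi> u")
        case True
        then have "s \<noteq> v" using vu by auto
        then show ?thesis using Lp_off[of v s] s vu w_nonneg True by auto
      qed simp
    qed (use vu in auto)
    then have "(if \<pi> v = \<pi> v then \<alpha> v else 0) * (\<Sum>s<N. Lp v s * (if \<pi> s = \<pi> u then 1 else 0))
        \<le> \<alpha> v * Lp v u" using vu by (simp add: mult_left_mono)
    also have "\<alpha> v * Lp v u < 0"
    proof -
      have "v \<noteq> u" using vu by auto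
      then have "Lp v u = - w v u" using Lp_off[of v u] vu by auto
      then show ?thesis using vu by (simp add: mult_pos_neg)
    qed
    finally show ?thesis .
  qed
  obtain T r where T: "T \<subseteq> arcs w N" "r < N" "\<forall>v < N. v \<noteq> r \<longrightarrow> (\<exists>!u. (u, v) \<in> T)"
    "\<forall>u. (u, r) \<notin> T" "ugraph_tree (\<lambda>a b. (a, b) \<in> T \<or> (b, a) \<in> T) N"
    using spanA unfolding has_directed_rooted_spanning_tree_def by blast
  have edge: "(N - 2, N - 1) \<in> T \<or> (N - 1, N - 2) \<in> T"
    using edge_in_T[OF treeA T(1) w_nonneg T(5) _ _ adj_last] N3 by auto
  have alpha_pos: "\<alpha> v > 0" if uv: "(u, v) \<in> T" "\<pi> u \<noteq> \<pi> v" for u v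
  proof -
    from uv T(1) have uvN: "u < N" "v < N" "u \<noteq> v" "w v u > 0" unfolding arcs_def by auto
    have vr: "v \<noteq> r" using uv T(4) by auto
    show ?thesis
    proof (cases "v < N - 2")
      case True then show ?thesis unfolding \<alpha>_def by simp
    next
      case False
      then have uN2: "u < N - 2" using uv uvN unfolding \<pi>_def by (auto split: if_splits)
      show ?thesis
      proof (cases "v = N - 2")
        case True
        have "w (N - 1) (N - 2) > 0"
        proof (rule ccontr)
          assume "\<not> w (N - 1) (N - 2) > 0"
          then have n: "(N - 2, N - 1) \<notin> T" using T(1) unfolding arcs_def by auto
          then have "(N - 1, N - 2) \<in> T" using edge by auto
          then have "u = N - 1" using T(3) uvN vr uv(1) True by metis
          then show False using uN2 by simp
        qed
        then show ?thesis unfolding \<alpha>_def using True s0 N3 by simp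
      next
        case False
        then have vN1: "v = N - 1" using \<open>\<not> v < N - 2\<close> uvN by auto
        have "w (N - 2) (N - 1) > 0"
        proof (rule ccontr)
          assume "\<not> w (N - 2) (N - 1) > 0"
          then have n: "(N - 1, N - 2) \<notin> T" using T(1) unfolding arcs_def by auto
          then have "(N - 2, N - 1) \<in> T" using edge by auto
          then have "u = N - 2" using T(3) uvN vr uv(1) vN1 by metis
          then show False using uN2 by simp
        qed
        then show ?thesis unfolding \<alpha>_def using False \<open>\<not> v < N - 2\<close> s0 by simp
      qed
    qed
  qed
  show "\<exists>r' < N - 1. \<forall>S. S \<subseteq> {..<N - 1} \<longrightarrow> S \<noteq> {} \<longrightarrow>
          (\<forall>p q. p \<in> S \<longrightarrow> q < N - 1 \<longrightarrow> p \<noteq> q \<longrightarrow> Lh p q < 0 \<longrightarrow> q \<in> S) \<longrightarrow> r' \<in> S"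
  proof (intro exI[of _ "\<pi> r"] conjI allI impI)
    show "\<pi> r < N - 1" using piM unfolding M_def .
    fix S assume S: "S \<subseteq> {..<N - 1}" "S \<noteq> {}"
      and cl: "\<forall>p q. p \<in> S \<longrightarrow> q < N - 1 \<longrightarrow> p \<noteq> q \<longrightarrow> Lh p q < 0 \<longrightarrow> q \<in> S"
    obtain s where s: "s \<in> S" using S by auto
    then have sM: "s < N - 1" using S by auto
    then have ps: "\<pi> s = s" unfolding \<pi>_def by auto
    define S' where "S' = {v. v < N \<and> \<pi> v \<in> S}"
    have "r \<in> S'"
    proof (rule root_reach[OF T(5) T(3) T(4) T(2)])
      show "s \<in> S'" "s < N" using s ps sM unfolding S'_def by auto
      fix u v assume uv: "(u, v) \<in> T" "v \<in> S'"
      from uv T(1) have uvN: "u < N" "v < N" "w v u > 0" unfolding arcs_def by auto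
      show "u \<in> S'"
      proof (cases "\<pi> u = \<pi> v")
        case True then show ?thesis using uv uvN unfolding S'_def by auto
      next
        case False
        have "Lh (\<pi> v) (\<pi> u) < 0"
          by (rule strict) (use uvN False alpha_pos[OF uv(1) False] in auto)
        then have "\<pi> u \<in> S" using cl uv False piM unfolding S'_def M_def by auto
        then show ?thesis using uvN unfolding S'_def by auto
      qed
    qed
    then show "\<pi> r \<in> S" unfolding S'_def by auto
  qed
qed


lemma Re_sum_of_real: "Re (\<Sum>q<M. complex_of_real (L q) * x q) = (\<Sum>q<M. L q * Re (x q))"
  by (simp add: Re_sum)
lemma Im_sum_of_real: "Im (\<Sum>q<M. complex_of_real (L q) * x q) = (\<Sum>q<M. L q * Im (x q))"
  by (simp add: Im_sum)

lemma L2_eig: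
  fixes Lh :: "nat \<Rightarrow> nat \<Rightarrow> real" and M :: nat and lam :: complex
  assumes rowsum: "\<And>p. p < M \<Longrightarrow> (\<Sum>q<M. Lh p q) = 0"
    and offd: "\<And>p q. p < M \<Longrightarrow> q < M \<Longrightarrow> q \<noteq> p \<Longrightarrow> Lh p q \<le> 0"
    and reach: "\<And>S. S \<subseteq> {..<M} \<Longrightarrow> S \<noteq> {} \<Longrightarrow>
        (\<And>p q. p \<in> S \<Longrightarrow> q < M \<Longrightarrow> p \<noteq> q \<Longrightarrow> Lh p q < 0 \<Longrightarrow> q \<in> S) \<Longrightarrow> r \<in> S"
    and r: "r < M"
    and ev: "eigenvalue (Matrix.mat (M - 1) (M - 1) (\<lambda>(k,q). complex_of_real (Lh (k+1) (q+1) - Lh 0 (q+1)))) lam"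
  shows "Re lam > 0"
proof -
  define p where "p = M - 1"
  have Mp: "M = Suc p" using r unfolding p_def by auto
  define L2 where "L2 = Matrix.mat p p (\<lambda>(k,q). complex_of_real (Lh (k+1) (q+1) - Lh 0 (q+1)))"
  obtain v where v: "v \<in> carrier_vec p" "v \<noteq> 0\<^sub>v p" "L2 *\<^sub>v v = lam \<cdot>\<^sub>v v"
    using ev unfolding eigenvalue_def eigenvector_def L2_def p_def by auto
  obtain k1 where k1: "k1 < p" "v $ k1 \<noteq> 0"
  proof -
    have "\<exists>k<p. v $ k \<noteq> 0"
    proof (rule ccontr)
      assume "\<not> (\<exists>k<p. v $ k \<noteq> 0)"
      then have "v = 0\<^sub>v p" using v(1) by (intro eq_vecI) auto
      then show False using v(2) by simp
    qed
    then show ?thesis using that by blast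
  qed
  define x where "x q = (if q = 0 then 0 else v $ (q - 1))" for q
  define c where "c = (\<Sum>q<M. complex_of_real (Lh 0 q) * x q)"
  have shift: "(\<Sum>q<M. complex_of_real (Lh P q) * x q) = (\<Sum>q<p. complex_of_real (Lh P (q+1)) * v $ q)" for P
    unfolding Mp sum.lessThan_Suc_shift by (simp add: x_def)
  have Lv: "(\<Sum>q<p. complex_of_real (Lh (k+1) (q+1) - Lh 0 (q+1)) * v $ q) = lam * v $ k"
    if k: "k < p" for k
  proof -
    have "(L2 *\<^sub>v v) $ k = (\<Sum>q<p. complex_of_real (Lh (k+1) (q+1) - Lh 0 (q+1)) * v $ q)"
      using k v(1) unfolding L2_def by (simp add: scalar_prod_def atLeast0LessThan row_def)
    then show ?thesis using v(3) k v(1) by simp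
  qed
  have eqx: "(\<Sum>q<M. complex_of_real (Lh P q) * x q) = lam * x P + c" if P: "P < M" for P
  proof (cases P)
    case 0 then show ?thesis unfolding c_def x_def by simp
  next
    case (Suc k)
    then have k: "k < p" using P Mp by simp
    have "(\<Sum>q<M. complex_of_real (Lh P q) * x q) - c
        = (\<Sum>q<p. complex_of_real (Lh (k+1) (q+1) - Lh 0 (q+1)) * v $ q)"
      unfolding c_def shift Suc by (simp add: sum_subtractf algebra_simps)
    also have "\<dots> = lam * x P" using Lv[OF k] unfolding x_def Suc by simp
    finally show ?thesis by (simp add: algebra_simps)
  qed
  have x0: "x 0 = 0" unfolding x_def by simp
  have xk1: "x (Suc k1) = v $ k1" unfolding x_def by simp
  have k1M: "Suc k1 < M" using k1 Mp by simp
  show ?thesis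
  proof (cases "lam = 0")
    case lam0: True
    show ?thesis
    proof (cases "c = 0")
      case True
      have ker: "(\<Sum>q<M. complex_of_real (Lh P q) * x q) = 0" if "P < M" for P
        using eqx[OF that] lam0 True by simp
      have reK: "(\<Sum>q<M. Lh P q * Re (x q)) = 0" if "P < M" for P
        using arg_cong[OF ker[OF that], of Re] unfolding Re_sum_of_real by simp
      have imK: "(\<Sum>q<M. Lh P q * Im (x q)) = 0" if "P < M" for P
        using arg_cong[OF ker[OF that], of Im] unfolding Im_sum_of_real by simp
      have ReE: "Re (x P) = Re (x r)" if "P < M" for P
        by (rule lap_kernel[where L=Lh and x="\<lambda>q. Re (x q)", OF rowsum offd reach r reK that])
      have ImE: "Im (x P) = Im (x r)" if "P < M" for P
        by (rule lap_kernel[where L=Lh and x="\<lambda>q. Im (x q)", OF rowsum offd reach r imK that])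
      have M0: "0 < M" using r by simp
      have "x P = x 0" if "P < M" for P
      proof -
        have "Re (x P) = Re (x 0)" using ReE[OF that] ReE[OF M0] by linarith
        moreover have "Im (x P) = Im (x 0)" using ImE[OF that] ImE[OF M0] by linarith
        ultimately show ?thesis by (simp add: complex_eq_iff)
      qed
      then have "x (Suc k1) = 0" using k1M x0 by simp
      then show ?thesis using xk1 k1 by simp
    next
      case False
      define y where "y q = x q / c" for q
      have one: "(\<Sum>q<M. complex_of_real (Lh P q) * y q) = 1" if "P < M" for P
      proof -
        have "(\<Sum>q<M. complex_of_real (Lh P q) * y q) = (\<Sum>q<M. complex_of_real (Lh P q) * x q) / c"
          unfolding y_def by (simp add: sum_divide_distrib)
        then show ?thesis using eqx[OF that] lam0 False by simp
      qed
      have "(\<Sum>q<M. Lh P q * Re (y q)) = 1" if "P < M" for P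
        using arg_cong[OF one[OF that], of Re] unfolding Re_sum_of_real by simp
      moreover have "\<exists>P<M. (\<Sum>q<M. Lh P q * Re (y q)) \<noteq> 1"
        by (rule lap_no_one[OF rowsum offd]) (use r in auto)
      ultimately show ?thesis by auto
    qed
  next
    case False
    define y where "y q = x q + c / lam" for q
    have evy: "(\<Sum>q<M. complex_of_real (Lh P q) * y q) = lam * y P" if P: "P < M" for P
    proof -
      have "(\<Sum>q<M. complex_of_real (Lh P q) * y q)
          = (\<Sum>q<M. complex_of_real (Lh P q) * x q) + (c / lam) * complex_of_real (\<Sum>q<M. Lh P q)"
        unfolding y_def by (simp add: algebra_simps sum.distrib sum_distrib_left)
      also have "\<dots> = lam * x P + c" using eqx[OF P] rowsum[OF P] by simp
      also have "\<dots> = lam * y P" unfolding y_def using False by (simp add: algebra_simps)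
      finally show ?thesis .
    qed
    have "\<exists>P0<M. y P0 \<noteq> 0"
    proof (cases "c = 0")
      case True then show ?thesis using k1M xk1 k1 unfolding y_def by (intro exI[of _ "Suc k1"]) auto
    next
      case c: False
      have "y 0 \<noteq> 0" unfolding y_def x_def using c False by simp
      then show ?thesis using r by (intro exI[of _ 0]) auto
    qed
    then obtain P0 where P0: "P0 < M" "y P0 \<noteq> 0" by auto
    show ?thesis
      by (rule lap_gersh[where L=Lh and x=y, OF rowsum offd evy P0 False])
  qed
qed


lemma divmod_block: fixes i n k :: nat shows "i < n \<Longrightarrow> (k * n + i) div n = k" "i < n \<Longrightarrow> (k * n + i) mod n = i"
  by auto

lemma block_lt: fixes k p i n :: nat shows "k < p \<Longrightarrow> i < n \<Longrightarrow> k * n + i < p * n"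
proof -
  assume "k < p" "i < n"
  then have "k * n + i < k * n + n" by simp
  also have "\<dots> = Suc k * n" by simp
  also have "\<dots> \<le> p * n" using \<open>k < p\<close> by (intro mult_right_mono) auto
  finally show ?thesis .
qed

lemma kron_mult_vec:
  assumes X: "X \<in> carrier_mat a b" and Y: "Y \<in> carrier_mat c d"
    and v: "v \<in> carrier_vec (b * d)" and P: "P < a" and i: "i < c"
  shows "(kron X Y *\<^sub>v v) $ (P * c + i) = (\<Sum>q<b. \<Sum>j<d. X $$ (P,q) * Y $$ (i,j) * v $ (q * d + j))"
proof -
  have r: "P * c + i < a * c" by (rule block_lt[OF P i])
  have "(kron X Y *\<^sub>v v) $ (P * c + i) = (\<Sum>s<b*d. kron X Y $$ (P * c + i, s) * v $ s)"
    using r X Y v unfolding kron_def by (simp add: scalar_prod_def atLeast0LessThan row_def)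
  also have "\<dots> = (\<Sum>q<b. \<Sum>j<d. kron X Y $$ (P * c + i, q * d + j) * v $ (q * d + j))"
    by (rule sum_blocks)
  also have "\<dots> = (\<Sum>q<b. \<Sum>j<d. X $$ (P,q) * Y $$ (i,j) * v $ (q * d + j))"
  proof (rule sum.cong[OF refl], rule sum.cong[OF refl])
    fix q j assume q: "q \<in> {..<b}" and j: "j \<in> {..<d}"
    have "q * d + j < b * d" using q j by (intro block_lt) auto
    then show "kron X Y $$ (P * c + i, q * d + j) * v $ (q * d + j) = X $$ (P,q) * Y $$ (i,j) * v $ (q * d + j)"
      using r X Y i j unfolding kron_def by (simp add: divmod_block)
  qed
  finally show ?thesis .
qed

lemma F2_mult:
  fixes L2 :: "complex mat" and Am BC :: "nat \<Rightarrow> nat \<Rightarrow> complex" and f :: "nat \<Rightarrow> complex"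
  assumes F2: "F2 = Matrix.mat (p*n) (p*n) (\<lambda>(r,c). (if r div n = c div n then Am (r mod n) (c mod n) else 0)
       - L2 $$ (r div n, c div n) * BC (r mod n) (c mod n))"
    and k: "k < p" and i: "i < n"
  shows "(\<Sum>l<p*n. F2 $$ (k*n+i, l) * f l)
       = (\<Sum>j<n. Am i j * f (k*n+j)) - (\<Sum>q<p. L2 $$ (k,q) * (\<Sum>j<n. BC i j * f (q*n+j)))"
proof -
  have r: "k*n+i < p*n" by (rule block_lt[OF k i])
  have "(\<Sum>l<p*n. F2 $$ (k*n+i, l) * f l) = (\<Sum>q<p. \<Sum>j<n. F2 $$ (k*n+i, q*n+j) * f (q*n+j))"
    by (rule sum_blocks)
  also have "\<dots> = (\<Sum>q<p. \<Sum>j<n. (if k = q then Am i j * f (q*n+j) else 0)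
        - L2 $$ (k,q) * (BC i j * f (q*n+j)))"
  proof (rule sum.cong[OF refl], rule sum.cong[OF refl])
    fix q j assume q: "q \<in> {..<p}" and j: "j \<in> {..<n}"
    have "q*n+j < p*n" using q j by (intro block_lt) auto
    then show "F2 $$ (k*n+i, q*n+j) * f (q*n+j) = (if k = q then Am i j * f (q*n+j) else 0)
        - L2 $$ (k,q) * (BC i j * f (q*n+j))"
      using r i j unfolding F2 by (simp add: divmod_block algebra_simps)
  qed
  also have "\<dots> = (\<Sum>q<p. (if k = q then (\<Sum>j<n. Am i j * f (q*n+j)) else 0))
        - (\<Sum>q<p. L2 $$ (k,q) * (\<Sum>j<n. BC i j * f (q*n+j)))"
  proof -
    have "(\<Sum>q<p. \<Sum>j<n. (if k = q then Am i j * f (q*n+j) else 0) - L2 $$ (k,q) * (BC i j * f (q*n+j)))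
       = (\<Sum>q<p. \<Sum>j<n. (if k = q then Am i j * f (q*n+j) else 0))
         - (\<Sum>q<p. \<Sum>j<n. L2 $$ (k,q) * (BC i j * f (q*n+j)))"
      by (simp only: sum_subtractf)
    also have "(\<Sum>q<p. \<Sum>j<n. (if k = q then Am i j * f (q*n+j) else 0))
        = (\<Sum>q<p. (if k = q then (\<Sum>j<n. Am i j * f (q*n+j)) else 0))"
      by (rule sum.cong[OF refl]) auto
    also have "(\<Sum>q<p. \<Sum>j<n. L2 $$ (k,q) * (BC i j * f (q*n+j)))
        = (\<Sum>q<p. L2 $$ (k,q) * (\<Sum>j<n. BC i j * f (q*n+j)))"
      by (simp only: sum_distrib_left)
    finally show ?thesis .
  qed
  also have "(\<Sum>q<p. (if k = q then (\<Sum>j<n. Am i j * f (q*n+j)) else 0)) = (\<Sum>j<n. Am i j * f (k*n+j))"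
    using k by (simp add: sum.delta)
  finally show ?thesis .
qed


hide_type (open) Finite_Cartesian_Product.vec


theorem theorem3:
  fixes n m N mbar :: nat
    and Q J R B A C G :: "real mat"
    and w :: "nat \<Rightarrow> nat \<Rightarrow> real"
    and \<xi> :: "real \<Rightarrow> real vec"
    and u :: "real \<Rightarrow> real vec"
  assumes Q: "pos_def n Q"
    and J: "J \<in> carrier_mat n n" "skew_mat J"
    and R: "pos_semidef n R"
    and B: "B \<in> carrier_mat n m"
    and A_def: "A = (J - R) * Q"
    and C_def: "C = transpose_mat B * Q"
    and minimal: "minimal_realization n A B C"
    and N3: "N \<ge> 3"
    and w_nonneg: "\<forall>i < N. \<forall>j < N. i \<noteq> j \<longrightarrow> w i j \<ge> 0"
    and G: "G \<in> carrier_mat N mbar"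
    and treeA: "ugraph_tree (und_adj w) N"
    and spanA: "has_directed_rooted_spanning_tree w N"
    and adj_last: "und_adj w (N - 2) (N - 1)"
    and u_zero: "\<forall>t \<ge> 0. u t = 0\<^sub>v (mbar * m)"
    and \<xi>_dim: "\<forall>t \<ge> 0. \<xi> t \<in> carrier_vec ((N - 1) * n)"
    and \<xi>_sol: "\<forall>t \<ge> 0. \<forall>k < (N - 1) * n.
        ((\<lambda>s. \<xi> s $ k) has_real_derivative
           ((kron (1\<^sub>m (N - 1)) A
               - kron (transpose_mat (clusterW w N) * laplacian w N * clusterV N) (B * C)) *\<^sub>v \<xi> t
            + kron (transpose_mat (clusterW w N) * G) B *\<^sub>v u t) $ k)
        (at t within {0..})"
  shows "\<forall>p < N - 1. \<forall>q < N - 1. \<forall>i < n.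
           ((\<lambda>t. \<xi> t $ (p * n + i) - \<xi> t $ (q * n + i)) \<longlongrightarrow> 0) at_top"
proof -
  define M where "M = N - 1"
  define Np where "Np = M - 1"
  define K where "K = Np * n"
  have MNp: "M = Suc Np" unfolding Np_def M_def using N3 by auto
  have obs: "observable n A C" using minimal unfolding minimal_realization_def by auto
  define LhM where "LhM = transpose_mat (clusterW w N) * laplacian w N * clusterV N"
  define Lh where "Lh P q = LhM $$ (P,q)" for P q
  note LP = Lh_props[OF N3 w_nonneg treeA spanA adj_last]
  have rowsum: "\<And>P. P < M \<Longrightarrow> (\<Sum>q<M. Lh P q) = 0"
    using LP(1) unfolding M_def Lh_def LhM_def by simp
  have offd: "\<And>P q. P < M \<Longrightarrow> q < M \<Longrightarrow> q \<noteq> P \<Longrightarrow> Lh P q \<le> 0"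
    using LP(2) unfolding M_def Lh_def LhM_def by simp
  obtain r' where r': "r' < M" and reach0: "\<forall>S. S \<subseteq> {..<M} \<longrightarrow> S \<noteq> {} \<longrightarrow>
      (\<forall>P q. P \<in> S \<longrightarrow> q < M \<longrightarrow> P \<noteq> q \<longrightarrow> Lh P q < 0 \<longrightarrow> q \<in> S) \<longrightarrow> r' \<in> S"
    using LP(3) unfolding M_def Lh_def LhM_def by blast
  have reach: "\<And>S. S \<subseteq> {..<M} \<Longrightarrow> S \<noteq> {} \<Longrightarrow>
      (\<And>P q. P \<in> S \<Longrightarrow> q < M \<Longrightarrow> P \<noteq> q \<Longrightarrow> Lh P q < 0 \<Longrightarrow> q \<in> S) \<Longrightarrow> r' \<in> S"
    using reach0 by blast
  define L2 where "L2 = Matrix.mat Np Np (\<lambda>(k,q). complex_of_real (Lh (k+1) (q+1) - Lh 0 (q+1)))"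
  have L2c: "L2 \<in> carrier_mat Np Np" unfolding L2_def by simp
  have L2eq: "L2 = Matrix.mat (M - 1) (M - 1) (\<lambda>(k,q). complex_of_real (Lh (k+1) (q+1) - Lh 0 (q+1)))"
    unfolding L2_def Np_def ..
  have L2pos: "Re lam > 0" if "eigenvalue L2 lam" for lam
    by (rule L2_eig[where Lh=Lh and M=M, OF rowsum offd reach r' that[unfolded L2eq]])
  define Am where "Am i j = complex_of_real (A $$ (i,j))" for i j
  define BCm where "BCm i j = complex_of_real ((B * C) $$ (i,j))" for i j
  define F2 where "F2 = Matrix.mat K K (\<lambda>(r,c). (if r div n = c div n then Am (r mod n) (c mod n) else 0)
       - L2 $$ (r div n, c div n) * BCm (r mod n) (c mod n))"
  have F2eq: "F2 = Matrix.mat (Np*n) (Np*n) (\<lambda>(r,c). (if r div n = c div n then Am (r mod n) (c mod n) else 0)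
       - L2 $$ (r div n, c div n) * BCm (r mod n) (c mod n))" unfolding F2_def K_def ..
  have F2c: "F2 \<in> carrier_mat K K" unfolding F2_def by simp
  have F2neg: "Re mu < 0" if ev: "eigenvalue F2 mu" for mu
  proof -
    obtain v where v: "v \<in> carrier_vec K" "v \<noteq> 0\<^sub>v K" "F2 *\<^sub>v v = mu \<cdot>\<^sub>v v"
      using ev F2c unfolding eigenvalue_def eigenvector_def by auto
    obtain c where c: "c < K" "v $ c \<noteq> 0"
    proof -
      have "\<exists>c<K. v $ c \<noteq> 0"
      proof (rule ccontr)
        assume "\<not> (\<exists>c<K. v $ c \<noteq> 0)"
        then have "v = 0\<^sub>v K" using v(1) by (intro eq_vecI) auto
        then show False using v(2) by simp
      qed
      then show ?thesis using that by blast
    qed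
    have n0: "n > 0" using c unfolding K_def by (cases n) auto
    define k1 where "k1 = c div n"
    define i1 where "i1 = c mod n"
    have k1: "k1 < Np" using c n0 unfolding k1_def K_def by (simp add: less_mult_imp_div_less)
    have i1: "i1 < n" using n0 unfolding i1_def by simp
    have c_eq: "c = k1 * n + i1" unfolding k1_def i1_def by simp
    show ?thesis
    proof (rule kron_eig[where Am=Am and BC=BCm and v="\<lambda>c. v $ c", OF L2c])
      fix lam z i0
      assume lam: "eigenvalue L2 lam"
        and eqz: "\<And>i. i < n \<Longrightarrow> (\<Sum>j<n. Am i j * z j) - lam * (\<Sum>j<n. BCm i j * z j) = mu * z i"
        and z: "i0 < n" "z i0 \<noteq> 0"
      show "Re mu < 0"
        by (rule block_hurwitz[where z=z and lam=lam and mu=mu, OF Q J(1) J(2) R B A_def C_def obs _ z L2pos[OF lam]])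
           (use eqz in \<open>simp add: Am_def BCm_def\<close>)
    next
      fix k i assume k: "k < Np" and i: "i < n"
      have r: "k * n + i < K" unfolding K_def by (rule block_lt[OF k i])
      have "(F2 *\<^sub>v v) $ (k*n+i) = (\<Sum>l<Np*n. F2 $$ (k*n+i, l) * v $ l)"
        using r F2c v(1) unfolding K_def by (simp add: scalar_prod_def atLeast0LessThan row_def)
      also have "\<dots> = (\<Sum>j<n. Am i j * v $ (k*n+j)) - (\<Sum>q<Np. L2 $$ (k,q) * (\<Sum>j<n. BCm i j * v $ (q*n+j)))"
        by (rule F2_mult[OF F2eq k i])
      finally show "(\<Sum>j<n. Am i j * v $ (k*n+j)) - (\<Sum>q<Np. L2 $$ (k,q) * (\<Sum>j<n. BCm i j * v $ (q*n+j)))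
          = mu * v $ (k*n+i)" using v(3) r v(1) by simp
    next
      show "k1 < Np" "i1 < n" "v $ (k1 * n + i1) \<noteq> 0" using k1 i1 c c_eq by auto
    qed
  qed
  have Rc: "R \<in> carrier_mat n n" using R unfolding pos_semidef_def by simp
  have Qc: "Q \<in> carrier_mat n n" using Q unfolding pos_def_def by simp
  have JRc: "J - R \<in> carrier_mat n n" using J(1) Rc by (simp add: minus_carrier_mat)
  have Ac: "A \<in> carrier_mat n n" unfolding A_def using JRc Qc by simp
  have Cc: "C \<in> carrier_mat m n" unfolding C_def using B Q unfolding pos_def_def by simp
  have BCc: "B * C \<in> carrier_mat n n" using B Cc by simp
  have Wc: "clusterW w N \<in> carrier_mat N M" unfolding clusterW_def M_def by simp
  have Vc: "clusterV N \<in> carrier_mat N M" unfolding clusterV_def M_def by simp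
  have Lc: "laplacian w N \<in> carrier_mat N N" unfolding laplacian_def by simp
  have LhMc: "LhM \<in> carrier_mat M M" unfolding LhM_def using Wc Vc Lc
    by (meson mult_carrier_mat transpose_carrier_mat)
  define K1 where "K1 = kron (1\<^sub>m M) A"
  define K2 where "K2 = kron LhM (B * C)"
  define K3 where "K3 = kron (transpose_mat (clusterW w N) * G) B"
  have K1c: "K1 \<in> carrier_mat (M*n) (M*n)" unfolding K1_def kron_def using Ac by simp
  have K2c: "K2 \<in> carrier_mat (M*n) (M*n)" unfolding K2_def kron_def using LhMc B Cc by simp
  have K3c: "dim_col K3 = mbar * m" unfolding K3_def kron_def using G B Wc by simp
  have K3r: "dim_row K3 = M * n" unfolding K3_def kron_def using B Wc by simp
  define V where "V t = (K1 - K2) *\<^sub>v \<xi> t + K3 *\<^sub>v u t" for t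
  have Vent: "V t $ (P*n+i) = (\<Sum>j<n. A $$ (i,j) * \<xi> t $ (P*n+j))
      - (\<Sum>q<M. Lh P q * (\<Sum>j<n. (B*C) $$ (i,j) * \<xi> t $ (q*n+j)))"
    if t: "t \<ge> 0" and P: "P < M" and i: "i < n" for t P i
  proof -
    have xc: "\<xi> t \<in> carrier_vec (M*n)" using \<xi>_dim t unfolding M_def by auto
    have idx: "P*n+i < M*n" by (rule block_lt[OF P i])
    have "V t $ (P*n+i) = (K1 *\<^sub>v \<xi> t) $ (P*n+i) - (K2 *\<^sub>v \<xi> t) $ (P*n+i) + (K3 *\<^sub>v u t) $ (P*n+i)"
      unfolding V_def using K1c K2c xc idx K3r by (simp add: minus_mult_distrib_mat_vec)
    also have "(K3 *\<^sub>v u t) $ (P*n+i) = 0"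
    proof -
      have "dim_row K3 = M * n" unfolding K3_def kron_def using B Wc by simp
      then show ?thesis using u_zero t K3c idx by (simp add: scalar_prod_def)
    qed
    also have "(K1 *\<^sub>v \<xi> t) $ (P*n+i) = (\<Sum>j<n. A $$ (i,j) * \<xi> t $ (P*n+j))"
    proof -
      have "(K1 *\<^sub>v \<xi> t) $ (P*n+i) = (\<Sum>q<M. \<Sum>j<n. (1\<^sub>m M :: real mat) $$ (P,q) * A $$ (i,j) * \<xi> t $ (q*n+j))"
        unfolding K1_def by (rule kron_mult_vec[OF one_carrier_mat Ac xc P i])
      also have "\<dots> = (\<Sum>q<M. if q = P then (\<Sum>j<n. A $$ (i,j) * \<xi> t $ (q*n+j)) else 0)"
        by (rule sum.cong[OF refl]) (use P in auto)
      also have "\<dots> = (\<Sum>j<n. A $$ (i,j) * \<xi> t $ (P*n+j))" using P by (simp add: sum.delta')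
      finally show ?thesis .
    qed
    also have "(K2 *\<^sub>v \<xi> t) $ (P*n+i) = (\<Sum>q<M. Lh P q * (\<Sum>j<n. (B*C) $$ (i,j) * \<xi> t $ (q*n+j)))"
    proof -
      have "(K2 *\<^sub>v \<xi> t) $ (P*n+i) = (\<Sum>q<M. \<Sum>j<n. LhM $$ (P,q) * (B*C) $$ (i,j) * \<xi> t $ (q*n+j))"
        unfolding K2_def by (rule kron_mult_vec[OF LhMc BCc xc P i])
      also have "\<dots> = (\<Sum>q<M. Lh P q * (\<Sum>j<n. (B*C) $$ (i,j) * \<xi> t $ (q*n+j)))"
        unfolding Lh_def by (simp add: sum_distrib_left mult.assoc)
      finally show ?thesis .
    qed
    finally show ?thesis by simp
  qed
  define x where "x t r = complex_of_real (\<xi> t $ ((r div n + 1) * n + r mod n) - \<xi> t $ (r mod n))" for t r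
  have Vsol: "((\<lambda>s. \<xi> s $ k) has_real_derivative V t $ k) (at t)" if t: "t > 0" and k: "k < M * n" for t k
  proof -
    have "((\<lambda>s. \<xi> s $ k) has_real_derivative V t $ k) (at t within {0..})"
      using \<xi>_sol t k unfolding V_def K1_def K2_def K3_def LhM_def M_def by auto
    then have "((\<lambda>s. \<xi> s $ k) has_real_derivative V t $ k) (at t within {0<..})"
      by (rule DERIV_subset) auto
    moreover have "at t within {0<..} = at t" using t by (intro at_within_open) auto
    ultimately show ?thesis by simp
  qed
  have der: "((\<lambda>s. x s r) has_vector_derivative (\<Sum>l<K. F2 $$ (r,l) * x t l)) (at t)"
    if t: "t > 0" and r: "r < K" for t r
  proof -
    have n0: "n > 0" using r unfolding K_def by (cases n) auto
    define k where "k = r div n"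
    define i where "i = r mod n"
    have k: "k < Np" using r n0 unfolding k_def K_def by (simp add: less_mult_imp_div_less)
    have i: "i < n" using n0 unfolding i_def by simp
    have r_eq: "r = k * n + i" unfolding k_def i_def by simp
    have kM: "k + 1 < M" using k MNp by simp
    have idx1: "(k+1)*n + i < M*n" by (rule block_lt[OF kM i])
    have idx2: "0*n + i < M*n" by (rule block_lt) (use MNp i in auto)
    have D: "((\<lambda>s. \<xi> s $ ((k+1)*n+i) - \<xi> s $ (0*n+i)) has_real_derivative
        (V t $ ((k+1)*n+i) - V t $ (0*n+i))) (at t)"
      by (rule DERIV_diff[OF Vsol[OF t idx1] Vsol[OF t idx2]])
    have xs: "x s r = complex_of_real (\<xi> s $ ((k+1)*n+i) - \<xi> s $ (0*n+i))" for s
      unfolding x_def k_def i_def by simp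
    have xD: "((\<lambda>s. x s r) has_vector_derivative complex_of_real (V t $ ((k+1)*n+i) - V t $ (0*n+i))) (at t)"
      unfolding xs by (rule has_vector_derivative_of_real[OF D])
    define d where "d q j = \<xi> t $ ((q+1)*n + j) - \<xi> t $ (0*n+j)" for q j
    define Z where "Z q = (\<Sum>j<n. (B*C) $$ (i,j) * \<xi> t $ (q*n+j))" for q
    have Zd: "Z (q+1) - Z 0 = (\<Sum>j<n. (B*C) $$ (i,j) * d q j)" for q
      unfolding Z_def d_def by (simp add: sum_subtractf right_diff_distrib)
    define cq where "cq q = Lh (k+1) q - Lh 0 q" for q
    have csum: "(\<Sum>q<M. cq q) = 0" unfolding cq_def using rowsum[OF kM] rowsum[of 0] MNp
      by (simp add: sum_subtractf)
    have partL: "(\<Sum>q<M. Lh (k+1) q * Z q) - (\<Sum>q<M. Lh 0 q * Z q)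
        = (\<Sum>q<Np. cq (q+1) * (\<Sum>j<n. (B*C) $$ (i,j) * d q j))"
    proof -
      have "(\<Sum>q<M. Lh (k+1) q * Z q) - (\<Sum>q<M. Lh 0 q * Z q) = (\<Sum>q<M. cq q * Z q)"
        unfolding cq_def by (simp add: sum_subtractf left_diff_distrib)
      also have "\<dots> = (\<Sum>q<M. cq q * (Z q - Z 0)) + (\<Sum>q<M. cq q) * Z 0"
        by (simp add: right_diff_distrib sum_subtractf sum_distrib_right)
      also have "\<dots> = (\<Sum>q<M. cq q * (Z q - Z 0))" using csum by simp
      also have "\<dots> = (\<Sum>q<Np. cq (q+1) * (Z (q+1) - Z 0))"
        unfolding MNp sum.lessThan_Suc_shift by simp
      also have "\<dots> = (\<Sum>q<Np. cq (q+1) * (\<Sum>j<n. (B*C) $$ (i,j) * d q j))"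
        using Zd by simp
      finally show ?thesis .
    qed
    have partA: "(\<Sum>j<n. A $$ (i,j) * \<xi> t $ ((k+1)*n+j)) - (\<Sum>j<n. A $$ (i,j) * \<xi> t $ (0*n+j))
        = (\<Sum>j<n. A $$ (i,j) * d k j)"
      unfolding d_def by (simp add: sum_subtractf right_diff_distrib)
    have Vdiff: "V t $ ((k+1)*n+i) - V t $ (0*n+i)
        = (\<Sum>j<n. A $$ (i,j) * d k j) - (\<Sum>q<Np. cq (q+1) * (\<Sum>j<n. (B*C) $$ (i,j) * d q j))"
      using Vent[OF less_imp_le[OF t] kM i] Vent[of t 0 i] t MNp i partA partL
      unfolding Z_def by simp
    have xq: "x t (q*n+j) = complex_of_real (d q j)" if "j < n" for q j
      unfolding x_def d_def using that by (simp add: divmod_block)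
    have "(\<Sum>l<K. F2 $$ (r,l) * x t l)
        = (\<Sum>j<n. Am i j * x t (k*n+j)) - (\<Sum>q<Np. L2 $$ (k,q) * (\<Sum>j<n. BCm i j * x t (q*n+j)))"
      unfolding r_eq K_def by (rule F2_mult[OF F2eq k i])
    also have "\<dots> = (\<Sum>j<n. Am i j * complex_of_real (d k j))
        - (\<Sum>q<Np. complex_of_real (cq (q+1)) * (\<Sum>j<n. BCm i j * complex_of_real (d q j)))"
    proof -
      have "(\<Sum>j<n. Am i j * x t (k*n+j)) = (\<Sum>j<n. Am i j * complex_of_real (d k j))"
        by (rule sum.cong[OF refl]) (simp add: xq)
      moreover have "(\<Sum>q<Np. L2 $$ (k,q) * (\<Sum>j<n. BCm i j * x t (q*n+j)))
          = (\<Sum>q<Np. complex_of_real (cq (q+1)) * (\<Sum>j<n. BCm i j * complex_of_real (d q j)))"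
      proof (rule sum.cong[OF refl])
        fix q assume q: "q \<in> {..<Np}"
        have "L2 $$ (k,q) = complex_of_real (cq (q+1))" using k q unfolding L2_def cq_def by simp
        moreover have "(\<Sum>j<n. BCm i j * x t (q*n+j)) = (\<Sum>j<n. BCm i j * complex_of_real (d q j))"
          by (rule sum.cong[OF refl]) (simp add: xq)
        ultimately show "L2 $$ (k,q) * (\<Sum>j<n. BCm i j * x t (q*n+j))
            = complex_of_real (cq (q+1)) * (\<Sum>j<n. BCm i j * complex_of_real (d q j))" by simp
      qed
      ultimately show ?thesis by simp
    qed
    also have "\<dots> = complex_of_real (V t $ ((k+1)*n+i) - V t $ (0*n+i))"
      unfolding Vdiff Am_def BCm_def by (simp add: of_real_sum)
    finally show ?thesis using xD by simp
  qed
  have lim: "((\<lambda>t. x t r) \<longlongrightarrow> 0) at_top" if "r < K" for r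
    by (rule hurwitz_ode[OF F2c F2neg der that])
  have Dlim: "((\<lambda>t. \<xi> t $ (P*n+i) - \<xi> t $ (0*n+i)) \<longlongrightarrow> 0) at_top"
    if P: "P < M" and i: "i < n" for P i
  proof (cases P)
    case 0 then show ?thesis by simp
  next
    case (Suc k)
    then have k: "k < Np" using P MNp by simp
    have r: "k*n+i < K" unfolding K_def by (rule block_lt[OF k i])
    have "x t (k*n+i) = complex_of_real (\<xi> t $ (P*n+i) - \<xi> t $ (0*n+i))" for t
      unfolding x_def Suc using i by (simp add: divmod_block)
    then have "((\<lambda>t. complex_of_real (\<xi> t $ (P*n+i) - \<xi> t $ (0*n+i))) \<longlongrightarrow> complex_of_real 0) at_top"
      using lim[OF r] by simp
    then show ?thesis unfolding tendsto_of_real_iff .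
  qed
  show ?thesis
  proof (intro allI impI)
    fix p q i assume p: "p < N - 1" and q: "q < N - 1" and i: "i < n"
    have "((\<lambda>t. (\<xi> t $ (p*n+i) - \<xi> t $ (0*n+i)) - (\<xi> t $ (q*n+i) - \<xi> t $ (0*n+i))) \<longlongrightarrow> 0 - 0) at_top"
      by (intro tendsto_diff Dlim) (use p q i M_def in auto)
    then show "((\<lambda>t. \<xi> t $ (p * n + i) - \<xi> t $ (q * n + i)) \<longlongrightarrow> 0) at_top" by simp
  qed
qed


end
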